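(* Under Conditions 1 and 2, there exist constants $n_0\ge1$ and $C>0$ such that for all $n>n_0$, $\sup_{t\ge0}R^{(n)}_\beta(t)\le C$.
   Context: Notation: $\mathbb Z_+=\{1,2,\dots\}$, $\mathbb R_+=[0,\infty)$. For each $n\ge1$: $\lambda^{(n)}>0$; a probability $\Lambda^{(n)}$ on $\mathbb R_+$ with tail $\bar\Lambda^{(n)}(t)=\Lambda^{(n)}((t,\infty))$, $\eta^{(n)}=\int_0^\infty y\Lambda^{(n)}(dy)$, $\sigma^{(n)}=\frac12\int_0^\infty y^2\Lambda^{(n)}(dy)$ finite; probability laws $(p_k^{(n)})_{k\ge1}$, $(q_k^{(n)})_{k\ge1}$ on $\mathbb Z_+$ with generating functions $g^{(n)},h^{(n)}$, $m^{(n)}=\sum_kkp_k^{(n)}<\infty$; $\gamma_n>0$ with $\gamma_n\to\infty$, $\gamma_n/n\to\gamma_*\in[0,\infty)$. $\phi^{(n)}(z)=n\gamma_n[g^{(n)}(1-z/n)-(1-z/n)]$, $\psi^{(n)}(z)=\gamma_n[1-h^{(n)}(1-z/n)]$ for $z\in[0,n]$. Condition 1: (i) $\lambda^{(n)}\to\lambda>0$, $\eta^{(n)}\to\eta>0$, $\sigma^{(n)}\to\sigma>0$, $\gamma_n(1-\lambda^{(n)}\eta^{(n)})\to b\in\mathbb R$; (ii) $\psi^{(n)}\to\psi$ uniformly on compacts of $[0,\infty)$; (iii) $\{\phi^{(n)}\}$ is uniformly Lipschitz on bounded intervals and converges uniformly on compacts to a continuous $\phi$. Under Condition 1, $\lambda\eta=1$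 and $m:=\lim_n\gamma_n(1-m^{(n)})$ exists (so $\gamma_n(1-\lambda^{(n)}\eta^{(n)}m^{(n)})\to b+m$). Condition 2 (for some $\alpha\in(1,2)$): (1) there are $C,k_0>0$ with $n\gamma_n\sum_{k\ge k_0}(k/n)^\alpha p^{(n)}_k+\sum_kk^\alpha q^{(n)}_k\le C$ for all $n$, and $\lim_{k_1\to\infty}\limsup_n\gamma_n\sum_{k\ge k_1}kp^{(n)}_k=0$; (2) there are $C_0>0$ and a probability $\Lambda^*$ on $\mathbb R_+$ with $\int t^{2\alpha}\Lambda^*(dt)<\infty$ and $\bar\Lambda^{(n)}\le C_0\bar\Lambda^*$ for all $n$. Fix $\beta\in[0,\infty)$ with $\beta>-(b+m)/(\sigma\lambda)$. Let $R^{(n)}$ be the unique locally integrable solution of $R^{(n)}(t)=\lambda^{(n)}m^{(n)}\bar\Lambda^{(n)}(t)+\lambda^{(n)}m^{(n)}\int_0^tR^{(n)}(t-s)\bar\Lambda^{(n)}(s)ds$, $t\ge0$, and $R^{(n)}_\beta(t)=e^{-\beta t/\gamma_n}R^{(n)}(t)$. *)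

theory Defs
  imports "HOL-Probability.Probability"
begin

definition prob_on_Rplus :: "real measure \<Rightarrow> bool" where
  "prob_on_Rplus M \<longleftrightarrow> prob_space M \<and> sets M = sets borel \<and> (AE y in M. 0 \<le> y)"

definition tail :: "real measure \<Rightarrow> real \<Rightarrow> real" where
  "tail M t = measure M {t<..}"

definition first_moment :: "real measure \<Rightarrow> real" where
  "first_moment M = (\<integral>y. y \<partial>M)"

definition half_second_moment :: "real measure \<Rightarrow> real" where
  "half_second_moment M = (1/2) * (\<integral>y. y^2 \<partial>M)"

definition prob_on_Zplus :: "(nat \<Rightarrow> real) \<Rightarrow> bool" where
  "prob_on_Zplus p \<longleftrightarrow> p 0 = 0 \<and> (\<forall>k. 0 \<le> p k) \<and> p sums 1"

definition genfun :: "(nat \<Rightarrow> real) \<Rightarrow> real \<Rightarrow> real" where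
  "genfun p z = (\<Sum>k. p k * z ^ k)"

definition mean_nat :: "(nat \<Rightarrow> real) \<Rightarrow> real" where
  "mean_nat p = (\<Sum>k. real k * p k)"

text \<open>phi^(n)(z) = n gamma_n [g^(n)(1 - z/n) - (1 - z/n)],
      psi^(n)(z) = gamma_n [1 - h^(n)(1 - z/n)]  (meaningful for z in [0,n]).\<close>
definition phi_n :: "(nat \<Rightarrow> real) \<Rightarrow> (nat \<Rightarrow> nat \<Rightarrow> real) \<Rightarrow> nat \<Rightarrow> real \<Rightarrow> real" where
  "phi_n gam p n z = real n * gam n * (genfun (p n) (1 - z / real n) - (1 - z / real n))"

definition psi_n :: "(nat \<Rightarrow> real) \<Rightarrow> (nat \<Rightarrow> nat \<Rightarrow> real) \<Rightarrow> nat \<Rightarrow> real \<Rightarrow> real" where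
  "psi_n gam q n z = gam n * (1 - genfun (q n) (1 - z / real n))"

definition renewal_solution :: "real \<Rightarrow> real measure \<Rightarrow> real \<Rightarrow> (real \<Rightarrow> real) \<Rightarrow> bool" where
  "renewal_solution lam M m R \<longleftrightarrow>
     (\<forall>T\<ge>0. set_integrable lborel {0..T} R) \<and>
     (\<forall>t\<ge>0. R t = lam * m * tail M t + lam * m * (LBINT s=0..t. R (t - s) * tail M s))"

end

theory Submission
  imports Defs
begin

lemma lb_reflect:
  fixes f :: "real \<Rightarrow> real"
  shows "(LBINT s:{0..t}. f (t - s)) = (LBINT s:{0..t}. f s)"
proof -
  have "(LBINT s:{0..t}. f s) = (LBINT x. indicator {0..t} x * f x)"
    by (simp add: set_lebesgue_integral_def)
  also have "\<dots> = \<bar>-1\<bar> *\<^sub>R (LBINT x. indicator {0..t} (t + -1 * x) * f (t + -1 * x))"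
    by (rule lborel_integral_real_affine) simp
  also have "\<dots> = (LBINT x. indicator {0..t} (t + -1 * x) * f (t + -1 * x))" by simp
  also have "\<dots> = (LBINT x. indicator {0..t} x * f (t - x))"
    by (intro Bochner_Integration.integral_cong) (auto simp: indicator_def)
  finally show ?thesis by (simp add: set_lebesgue_integral_def)
qed

lemma lb_reflect_integrable:
  fixes f :: "real \<Rightarrow> real"
  shows "set_integrable lborel {0..t} (\<lambda>s. f (t - s)) \<longleftrightarrow> set_integrable lborel {0..t} f"
proof -
  have "set_integrable lborel {0..t} f \<longleftrightarrow> integrable lborel (\<lambda>x. indicator {0..t} x * f x)"
    by (simp add: set_integrable_def)
  also have "\<dots> \<longleftrightarrow> integrable lborel (\<lambda>x. indicator {0..t} (t + -1 * x) * f (t + -1 * x))"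
    by (rule lborel_integrable_real_affine_iff[symmetric]) simp
  also have "\<dots> \<longleftrightarrow> integrable lborel (\<lambda>x. indicator {0..t} x * f (t - x))"
    by (intro Bochner_Integration.integrable_cong) (auto simp: indicator_def)
  finally show ?thesis by (simp add: set_integrable_def)
qed

lemma lb_shift:
  fixes f :: "real \<Rightarrow> real"
  shows "(LBINT s:{a..b}. f s) = (LBINT s:{0..b-a}. f (a + s))"
proof -
  have "(LBINT s:{a..b}. f s) = (LBINT x. indicator {a..b} x * f x)"
    by (simp add: set_lebesgue_integral_def)
  also have "\<dots> = \<bar>1\<bar> *\<^sub>R (LBINT x. indicator {a..b} (a + 1 * x) * f (a + 1 * x))"
    by (rule lborel_integral_real_affine) simp
  also have "\<dots> = (LBINT x. indicator {a..b} (a + 1 * x) * f (a + 1 * x))" by simp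
  also have "\<dots> = (LBINT x. indicator {0..b-a} x * f (a + x))"
    by (intro Bochner_Integration.integral_cong) (auto simp: indicator_def)
  finally show ?thesis by (simp add: set_lebesgue_integral_def)
qed

lemma lb_shift_integrable:
  fixes f :: "real \<Rightarrow> real"
  shows "set_integrable lborel {a..b} f \<longleftrightarrow> set_integrable lborel {0..b-a} (\<lambda>s. f (a + s))"
proof -
  have "set_integrable lborel {a..b} f \<longleftrightarrow> integrable lborel (\<lambda>x. indicator {a..b} x * f x)"
    by (simp add: set_integrable_def)
  also have "\<dots> \<longleftrightarrow> integrable lborel (\<lambda>x. indicator {a..b} (a + 1 * x) * f (a + 1 * x))"
    by (rule lborel_integrable_real_affine_iff[symmetric]) simp
  also have "\<dots> \<longleftrightarrow> integrable lborel (\<lambda>x. indicator {0..b-a} x * f (a + x))"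
    by (intro Bochner_Integration.integrable_cong) (auto simp: indicator_def)
  finally show ?thesis by (simp add: set_integrable_def)
qed

lemma lb_split:
  fixes f :: "real \<Rightarrow> real"
  assumes "a \<le> b" "b \<le> c" "set_integrable lborel {a..c} f"
  shows "(LBINT s:{a..c}. f s) = (LBINT s:{a..b}. f s) + (LBINT s:{b..c}. f s)"
proof -
  have "{a..c} = {a..b} \<union> {b..c}" using assms by auto
  moreover have "(LBINT s:{a..b} \<union> {b..c}. f s) = (LBINT s:{a..b}. f s) + (LBINT s:{b..c}. f s)"
  proof (rule set_integral_Un_AE)
    show "AE x in lborel. \<not> (x \<in> {a..b} \<and> x \<in> {b..c})"
      using AE_lborel_singleton[of b] by eventually_elim auto
    show "set_integrable lborel {a..b} f"
      by (rule set_integrable_subset[OF assms(3)]) (use assms in auto)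
    show "set_integrable lborel {b..c} f"
      by (rule set_integrable_subset[OF assms(3)]) (use assms in auto)
  qed auto
  ultimately show ?thesis by simp
qed

lemma lb_nonneg:
  fixes f :: "real \<Rightarrow> real"
  assumes "\<And>x. x \<in> A \<Longrightarrow> 0 \<le> f x"
  shows "0 \<le> (LBINT x:A. f x)"
  unfolding set_lebesgue_integral_def
  by (rule Bochner_Integration.integral_nonneg) (use assms in \<open>auto simp: indicator_def\<close>)

lemma lb_const:
  assumes "a \<le> b"
  shows "(LBINT x:{a..b}. (C::real)) = (b - a) * C"
  using assms by (subst set_integral_const) (auto simp: measure_lborel_Icc)

lemma lb_point: "(LBINT x:{a..a}. (f::real\<Rightarrow>real) x) = 0"
proof -
  have "(LBINT x:{a..a}. f x) = (LBINT x. indicator {a..a} x * f x)"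
    by (simp add: set_lebesgue_integral_def)
  also have "\<dots> = 0"
    by (rule integral_eq_zero_AE) (use AE_lborel_singleton[of a] in \<open>eventually_elim, auto simp: indicator_def\<close>)
  finally show ?thesis .
qed

lemma set_integrable_bdd_mult:
  fixes f g :: "real \<Rightarrow> real"
  assumes "set_integrable lborel A f" "g \<in> borel_measurable borel" "\<And>x. \<bar>g x\<bar> \<le> B"
  shows "set_integrable lborel A (\<lambda>x. f x * g x)"
proof -
  have B: "0 \<le> B" using assms(3)[of 0] by simp
  have i: "integrable lborel (\<lambda>x. indicator A x * f x)"
    using assms(1) by (simp add: set_integrable_def)
  have "integrable lborel (\<lambda>x. B * (indicator A x * f x))"
    using i by simp
  moreover have "(\<lambda>x. (indicator A x * f x) * g x) \<in> borel_measurable lborel"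
    using borel_measurable_integrable[OF i] assms(2) by measurable
  ultimately have "integrable lborel (\<lambda>x. (indicator A x * f x) * g x)"
    apply (rule Bochner_Integration.integrable_bound)
    using assms(3) B by (auto simp: abs_mult intro!: mult_left_mono[of _ B] mult_right_mono[of _ B]
       simp: mult.commute[of B] mult_left_mono)
  then show ?thesis by (simp add: set_integrable_def mult.assoc)
qed

lemma set_integrable_bdd:
  fixes g :: "real \<Rightarrow> real"
  assumes "g \<in> borel_measurable borel" "\<And>x. \<bar>g x\<bar> \<le> B" "a \<le> b"
  shows "set_integrable lborel {a..b} g"
proof -
  have "set_integrable lborel {a..b} (\<lambda>x. 1 * g x)"
    by (rule set_integrable_bdd_mult[OF _ assms(1,2)])
       (simp add: set_integrable_def integrable_indicator_iff emeasure_lborel_Icc_eq)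
  then show ?thesis by simp
qed

lemma compare:
  fixes h d :: "real \<Rightarrow> real" and c :: real
  assumes c: "0 < c" and hm: "h \<in> borel_measurable borel"
    and h0: "\<And>t. 0 \<le> h t" and hc: "\<And>t. h t \<le> c"
    and dm: "d \<in> borel_measurable borel"
    and dint: "\<And>T. 0 \<le> T \<Longrightarrow> set_integrable lborel {0..T} d"
    and ineq: "\<And>t. 0 \<le> t \<Longrightarrow> d t \<le> (LBINT s:{0..t}. d (t - s) * h s)"
    and t: "0 \<le> t"
  shows "d t \<le> 0"
proof -
  define dp where "dp s = max (d s) 0" for s
  have dpm: "dp \<in> borel_measurable borel" unfolding dp_def using dm by measurable
  have dpI: "set_integrable lborel {0..T} dp" if "0 \<le> T" for T
  proof (rule set_integrable_bound[OF dint[OF that]])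
    show "set_borel_measurable lborel {0..T} dp"
      unfolding set_borel_measurable_def using dpm by measurable
    show "AE x\<in>{0..T} in lborel. norm (dp x) \<le> norm (d x)"
      by (auto simp: dp_def)
  qed
  define P where "P t = (LBINT s:{0..t}. dp s)" for t
  have P0: "0 \<le> P t" for t unfolding P_def by (rule lb_nonneg) (auto simp: dp_def)
  have hb: "\<bar>h x\<bar> \<le> c" for x using h0[of x] hc[of x] by simp
  have key: "dp t \<le> c * P t" if t: "0 \<le> t" for t
  proof -
    have i1: "set_integrable lborel {0..t} (\<lambda>s. d (t - s) * h s)"
      by (rule set_integrable_bdd_mult[OF _ hm hb]) (simp add: lb_reflect_integrable dint[OF t])
    have i2: "set_integrable lborel {0..t} (\<lambda>s. c * dp (t - s))"
      by (rule set_integrable_mult_right) (simp add: lb_reflect_integrable dpI[OF t])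
    have "d t \<le> (LBINT s:{0..t}. d (t - s) * h s)" by (rule ineq[OF t])
    also have "\<dots> \<le> (LBINT s:{0..t}. c * dp (t - s))"
    proof (rule set_integral_mono[OF i1 i2])
      fix s
      show "d (t - s) * h s \<le> c * dp (t - s)"
      proof (cases "0 \<le> d (t - s)")
        case True
        then have "d (t - s) * h s \<le> d (t - s) * c" by (intro mult_left_mono hc)
        then show ?thesis using True by (simp add: dp_def mult.commute)
      next
        case False
        then have "d (t - s) * h s \<le> 0" using h0[of s] by (simp add: mult_nonpos_nonneg)
        then show ?thesis using False c by (simp add: dp_def)
      qed
    qed
    also have "\<dots> = c * P t" by (simp add: set_integral_mult_right lb_reflect P_def)
    finally have "d t \<le> c * P t" .
    moreover have "0 \<le> c * P t" using c P0[of t] by simp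
    ultimately show ?thesis by (simp add: dp_def)
  qed
  have Pmono: "P s \<le> P u" if "0 \<le> s" "s \<le> u" for s u
  proof -
    have "P u = P s + (LBINT x:{s..u}. dp x)"
      unfolding P_def by (rule lb_split) (use that dpI[of u] in auto)
    moreover have "0 \<le> (LBINT x:{s..u}. dp x)" by (rule lb_nonneg) (auto simp: dp_def)
    ultimately show ?thesis by simp
  qed
  define \<tau> where "\<tau> = 1 / (2 * c)"
  have tau: "0 < \<tau>" "c * \<tau> = 1/2" using c by (auto simp: \<tau>_def)
  have ind: "\<forall>t. 0 \<le> t \<and> t \<le> real k * \<tau> \<longrightarrow> dp t = 0" for k :: nat
  proof (induction k)
    case 0
    have "dp 0 \<le> c * P 0" using key[of 0] by simp
    moreover have "P 0 = 0" unfolding P_def using lb_point[of 0 dp] by simp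
    ultimately show ?case by (auto simp: dp_def)
  next
    case (Suc k)
    define b where "b = real k * \<tau>"
    define b' where "b' = b + \<tau>"
    have b0: "0 \<le> b" using tau by (simp add: b_def)
    have bb': "real (Suc k) * \<tau> = b'" by (simp add: b_def b'_def algebra_simps)
    define J where "J = P b'"
    have Pb: "P b = 0"
    proof -
      have "P b = (LBINT x:{0..b}. (0::real))"
        unfolding P_def by (rule set_lebesgue_integral_cong) (use Suc.IH in \<open>auto simp: b_def\<close>)
      then show ?thesis by simp
    qed
    have "J = P b + (LBINT x:{b..b'}. dp x)"
      unfolding J_def P_def by (rule lb_split) (use b0 tau dpI[of b'] in \<open>auto simp: b'_def\<close>)
    also have "(LBINT x:{b..b'}. dp x) \<le> (LBINT x:{b..b'}. c * J)"
    proof (rule set_integral_mono)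
      show "set_integrable lborel {b..b'} dp"
        by (rule set_integrable_subset[OF dpI[of b']]) (use b0 tau in \<open>auto simp: b'_def\<close>)
      show "set_integrable lborel {b..b'} (\<lambda>x. c * J)"
        by (rule set_integrable_bdd[where B="\<bar>c * J\<bar>"]) (use tau in \<open>auto simp: b'_def\<close>)
      fix x assume x: "x \<in> {b..b'}"
      have "dp x \<le> c * P x" using key[of x] x b0 by simp
      also have "\<dots> \<le> c * J" unfolding J_def using Pmono[of x b'] x b0 c by (intro mult_left_mono) auto
      finally show "dp x \<le> c * J" .
    qed
    also have "(LBINT x:{b..b'}. c * J) = \<tau> * (c * J)"
      by (subst lb_const) (use tau in \<open>auto simp: b'_def\<close>)
    finally have "J \<le> P b + \<tau> * (c * J)" by simp
    moreover have "\<tau> * (c * J) = (c * \<tau>) * J" by simp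
    ultimately have "J \<le> J / 2" using Pb tau by simp
    moreover have "0 \<le> J" unfolding J_def by (rule P0)
    ultimately have J0: "J = 0" by simp
    show ?case
    proof (intro allI impI)
      fix t assume t: "0 \<le> t \<and> t \<le> real (Suc k) * \<tau>"
      have "dp t \<le> c * P t" using key t by simp
      also have "\<dots> \<le> c * J" unfolding J_def using Pmono[of t b'] t bb' c by (intro mult_left_mono) auto
      finally show "dp t = 0" using J0 by (simp add: dp_def)
    qed
  qed
  define k where "k = nat \<lceil>t / \<tau>\<rceil>"
  have "t / \<tau> \<le> real k" unfolding k_def by linarith
  then have "t \<le> real k * \<tau>" using tau by (simp add: divide_le_eq)
  then have "dp t = 0" using ind t by blast
  then show ?thesis by (simp add: dp_def)
qed

lemma lb_to_nn:
  fixes f :: "real \<Rightarrow> real"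
  assumes "set_integrable lborel A f" "\<And>x. x \<in> A \<Longrightarrow> 0 \<le> f x"
  shows "ennreal (LBINT x:A. f x) = (\<integral>\<^sup>+x. ennreal (indicator A x * f x) \<partial>lborel)"
  unfolding set_lebesgue_integral_def
  apply (subst nn_integral_eq_integral)
  using assms by (auto simp: set_integrable_def indicator_def)

lemma pair_meas:
  fixes f :: "real \<times> real \<Rightarrow> 'a::topological_space"
  assumes "f \<in> borel_measurable (borel \<Otimes>\<^sub>M borel)"
  shows "f \<in> borel_measurable (lborel \<Otimes>\<^sub>M lborel)"
proof -
  have "sets (lborel \<Otimes>\<^sub>M lborel) = sets (borel \<Otimes>\<^sub>M (borel::real measure))"
    by (intro sets_pair_measure_cong) simp_all
  then show ?thesis using assms measurable_cong_sets[of "lborel \<Otimes>\<^sub>M lborel" "borel \<Otimes>\<^sub>M borel" borel borel] by blast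
qed

lemma set_integrable_bdd_on:
  fixes g :: "real \<Rightarrow> real"
  assumes "g \<in> borel_measurable borel" "\<And>x. x \<in> {a..b} \<Longrightarrow> \<bar>g x\<bar> \<le> B" "a \<le> b"
  shows "set_integrable lborel {a..b} g"
proof (rule set_integrable_bound)
  show "set_integrable lborel {a..b} (\<lambda>x. B)"
    by (rule set_integrable_bdd[where B="\<bar>B\<bar>"]) (use assms in auto)
  show "set_borel_measurable lborel {a..b} g"
    unfolding set_borel_measurable_def using assms(1) by measurable
  show "AE x\<in>{a..b} in lborel. norm (g x) \<le> norm B"
    using assms(2) by (intro AE_I2) (force intro: order_trans[OF _ abs_ge_self])
qed

locale renew =
  fixes h v :: "real \<Rightarrow> real" and c :: real
  assumes c: "0 < c"
  and hm[measurable]: "h \<in> borel_measurable borel"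
  and h0: "\<And>t. 0 \<le> h t" and hc: "\<And>t. h t \<le> c"
  and hmono: "\<And>s t. 0 \<le> s \<Longrightarrow> s \<le> t \<Longrightarrow> h t \<le> h s"
  and hmass: "\<And>x. 0 \<le> x \<Longrightarrow> (LBINT s:{0..x}. h s) \<le> 1"
  and vm[measurable]: "v \<in> borel_measurable borel"
  and vint: "\<And>T. 0 \<le> T \<Longrightarrow> set_integrable lborel {0..T} v"
  and veq: "\<And>t. 0 \<le> t \<Longrightarrow> v t = h t + (LBINT s:{0..t}. v (t - s) * h s)"
begin

lemma hb: "\<bar>h x\<bar> \<le> c" using h0[of x] hc[of x] by simp

lemma hint: "set_integrable lborel {a..b} h" if "a \<le> b"
  by (rule set_integrable_bdd[OF hm hb that])

lemma conv_int: "set_integrable lborel {0..t} (\<lambda>s. f (t - s) * h s)"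
  if "set_integrable lborel {0..t} f" for f
  by (rule set_integrable_bdd_mult[OF _ hm hb]) (simp add: lb_reflect_integrable that)

lemma v_nonneg: "0 \<le> v t" if t: "0 \<le> t"
proof -
  have "- v t \<le> 0"
  proof (rule compare[OF c hm h0 hc, of "\<lambda>x. - v x"])
    show "(\<lambda>x. - v x) \<in> borel_measurable borel" by measurable
    show "set_integrable lborel {0..T} (\<lambda>x. - v x)" if "0 \<le> T" for T
      using vint[OF that] by (simp add: set_integrable_def)
    fix t :: real assume t: "0 \<le> t"
    have "(LBINT s:{0..t}. - v (t - s) * h s) = - (LBINT s:{0..t}. v (t - s) * h s)"
      by (simp add: set_lebesgue_integral_def)
    then show "- v t \<le> (LBINT s:{0..t}. - v (t - s) * h s)"
      using veq[OF t] h0[of t] by simp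
  qed (use t in auto)
  then show ?thesis by simp
qed

definition "H x = (LBINT s:{0..x}. h s)"
definition "V x = (LBINT s:{0..x}. v s)"

lemma H_nonneg: "0 \<le> H x" unfolding H_def by (rule lb_nonneg) (use h0 in auto)
lemma H_le1: "0 \<le> x \<Longrightarrow> H x \<le> 1" unfolding H_def by (rule hmass)
lemma H_le_c: "0 \<le> x \<Longrightarrow> H x \<le> c * x"
proof -
  assume x: "0 \<le> x"
  have "H x \<le> (LBINT s:{0..x}. c)" unfolding H_def
    by (rule set_integral_mono[OF hint set_integrable_bdd[where B="\<bar>c\<bar>"]]) (use x hc in auto)
  also have "\<dots> = c * x" using x by (simp add: lb_const)
  finally show ?thesis .
qed

lemma V_nonneg: "0 \<le> V x" unfolding V_def by (rule lb_nonneg) (use v_nonneg in auto)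

lemma V_neg: "x < 0 \<Longrightarrow> V x = 0" unfolding V_def by (simp add: set_lebesgue_integral_def)

lemma V_split: "0 \<le> s \<Longrightarrow> s \<le> u \<Longrightarrow> V u = V s + (LBINT x:{s..u}. v x)"
  unfolding V_def by (rule lb_split) (use vint[of u] in auto)

lemma V_mono: "s \<le> u \<Longrightarrow> V s \<le> V u"
proof -
  assume su: "s \<le> u"
  show ?thesis
  proof (cases "s < 0")
    case True then show ?thesis using V_neg V_nonneg by simp
  next
    case False
    then have "V u = V s + (LBINT x:{s..u}. v x)" using su V_split by simp
    moreover have "0 \<le> (LBINT x:{s..u}. v x)" by (rule lb_nonneg) (use False v_nonneg in auto)
    ultimately show ?thesis by simp
  qed
qed

lemma Vm[measurable]: "V \<in> borel_measurable borel"
  by (rule borel_measurable_mono) (auto simp: mono_def V_mono)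

lemma V_int: "set_integrable lborel {0..T} V" if "0 \<le> T"
  by (rule set_integrable_bdd_on[where B="V T"]) (use that V_mono V_nonneg in \<open>auto simp: abs_of_nonneg\<close>)

end

lemma set_integrable_cong_on:
  fixes f g :: "real \<Rightarrow> real"
  assumes "\<And>x. x \<in> A \<Longrightarrow> f x = g x"
  shows "set_integrable M A f \<longleftrightarrow> set_integrable M A g"
proof -
  have "(\<lambda>x. indicator A x * f x) = (\<lambda>x. indicator A x * g x)"
    using assms by (auto simp: indicator_def fun_eq_iff)
  then show ?thesis by (simp add: set_integrable_def)
qed

context renew begin

lemma V_eq:
  assumes t: "0 \<le> t"
  shows "V t = H t + (LBINT s:{0..t}. V (t - s) * h s)"
proof -
  define conv where "conv u = (LBINT s:{0..u}. v (u - s) * h s)" for u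
  have conv_eq: "conv u = v u - h u" if "0 \<le> u" for u using veq[OF that] by (simp add: conv_def)
  have convI: "set_integrable lborel {0..t} conv"
  proof -
    have "set_integrable lborel {0..t} (\<lambda>u. v u - h u)"
      by (rule set_integral_diff(1)[OF vint[OF t] hint]) (use t in auto)
    then show ?thesis using set_integrable_cong_on[of "{0..t}" conv "\<lambda>u. v u - h u" lborel] conv_eq by auto
  qed
  have conv_nn: "0 \<le> conv u" if "0 \<le> u" for u
    unfolding conv_def by (rule lb_nonneg) (use v_nonneg h0 in \<open>auto intro!: mult_nonneg_nonneg\<close>)
  have conv_alt: "conv u = (LBINT r:{0..u}. h (u - r) * v r)" for u
    using lb_reflect[of u "\<lambda>r. h (u - r) * v r"] by (simp add: conv_def mult.commute)
  have V1: "V t = H t + (LBINT u:{0..t}. conv u)"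
  proof -
    have "V t = (LBINT u:{0..t}. h u + conv u)"
      unfolding V_def by (rule set_lebesgue_integral_cong) (use conv_eq in auto)
    also have "\<dots> = H t + (LBINT u:{0..t}. conv u)"
      unfolding H_def by (rule set_integral_add(2)[OF hint convI]) (use t in auto)
    finally show ?thesis .
  qed
  define X where "X = (\<integral>\<^sup>+q. ennreal (indicator {0..t} q * v q * H (t - q)) \<partial>lborel)"
  have Hnn: "ennreal (H x) = (\<integral>\<^sup>+w. ennreal (indicator {0..x} w * h w) \<partial>lborel)" if "0 \<le> x" for x
    unfolding H_def by (rule lb_to_nn[OF hint]) (use that h0 in auto)
  have L: "ennreal (LBINT u:{0..t}. conv u) = X"
  proof -
    have "ennreal (LBINT u:{0..t}. conv u) = (\<integral>\<^sup>+u. ennreal (indicator {0..t} u * conv u) \<partial>lborel)"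
      by (rule lb_to_nn[OF convI]) (use conv_nn in auto)
    also have "\<dots> = (\<integral>\<^sup>+u. \<integral>\<^sup>+r. ennreal (indicator {0..t} u * indicator {0..u} r * h (u - r) * v r) \<partial>lborel \<partial>lborel)"
    proof (rule nn_integral_cong)
      fix u :: real
      show "ennreal (indicator {0..t} u * conv u) = (\<integral>\<^sup>+r. ennreal (indicator {0..t} u * indicator {0..u} r * h (u - r) * v r) \<partial>lborel)"
      proof (cases "u \<in> {0..t}")
        case True
        have i: "set_integrable lborel {0..u} (\<lambda>r. h (u - r) * v r)"
          using set_integrable_bdd_mult[OF vint[of u], of "\<lambda>r. h (u - r)" c] True hb
          by (auto simp: mult.commute)
        have "ennreal (conv u) = (\<integral>\<^sup>+r. ennreal (indicator {0..u} r * (h (u - r) * v r)) \<partial>lborel)"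
          unfolding conv_alt by (rule lb_to_nn[OF i]) (use h0 v_nonneg in auto)
        then show ?thesis using True by (simp add: mult.assoc)
      next
        case False then show ?thesis by simp
      qed
    qed
    also have "\<dots> = (\<integral>\<^sup>+r. \<integral>\<^sup>+u. ennreal (indicator {0..t} u * indicator {0..u} r * h (u - r) * v r) \<partial>lborel \<partial>lborel)"
      by (rule lborel_pair.Fubini'[symmetric], rule pair_meas) (unfold indicator_def atLeastAtMost_iff, measurable)
    also have "\<dots> = X" unfolding X_def
    proof (rule nn_integral_cong)
      fix r :: real
      show "(\<integral>\<^sup>+u. ennreal (indicator {0..t} u * indicator {0..u} r * h (u - r) * v r) \<partial>lborel) = ennreal (indicator {0..t} r * v r * H (t - r))"
      proof (cases "r \<in> {0..t}")
        case True
        have "(\<integral>\<^sup>+u. ennreal (indicator {0..t} u * indicator {0..u} r * h (u - r) * v r) \<partial>lborel)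
            = (\<integral>\<^sup>+u. ennreal (v r) * ennreal (indicator {r..t} u * h (u - r)) \<partial>lborel)"
          using True v_nonneg[of r] h0 by (intro nn_integral_cong) (auto simp: indicator_def ennreal_mult mult.commute)
        also have "\<dots> = ennreal (v r) * (\<integral>\<^sup>+u. ennreal (indicator {r..t} u * h (u - r)) \<partial>lborel)"
          by (rule nn_integral_cmult) measurable
        also have "(\<integral>\<^sup>+u. ennreal (indicator {r..t} u * h (u - r)) \<partial>lborel)
            = ennreal \<bar>1\<bar> * (\<integral>\<^sup>+x. ennreal (indicator {r..t} (r + 1 * x) * h ((r + 1 * x) - r)) \<partial>lborel)"
          by (rule nn_integral_real_affine) (unfold indicator_def atLeastAtMost_iff, measurable)
        also have "\<dots> = (\<integral>\<^sup>+x. ennreal (indicator {0..t - r} x * h x) \<partial>lborel)"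
          by (auto intro!: nn_integral_cong simp: indicator_def)
        also have "\<dots> = ennreal (H (t - r))" using Hnn[of "t - r"] True by simp
        finally show ?thesis using True v_nonneg[of r] H_nonneg
          by (simp add: ennreal_mult'[symmetric])
      next
        case False
        then have "\<And>u. indicator {0..t} u * indicator {0..u} r * h (u - r) * v r = 0"
          by (auto simp: indicator_def)
        then show ?thesis using False by (simp only:) simp
      qed
    qed
    finally show ?thesis .
  qed
  have RI: "set_integrable lborel {0..t} (\<lambda>s. V (t - s) * h s)" by (rule conv_int[OF V_int[OF t]])
  have R: "ennreal (LBINT s:{0..t}. V (t - s) * h s) = X"
  proof -
    have "ennreal (LBINT s:{0..t}. V (t - s) * h s) = (\<integral>\<^sup>+s. ennreal (indicator {0..t} s * (V (t - s) * h s)) \<partial>lborel)"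
      by (rule lb_to_nn[OF RI]) (use V_nonneg h0 in auto)
    also have "\<dots> = (\<integral>\<^sup>+s. \<integral>\<^sup>+q. ennreal (indicator {0..t} s * indicator {0..t - s} q * v q * h s) \<partial>lborel \<partial>lborel)"
    proof (rule nn_integral_cong)
      fix s :: real
      show "ennreal (indicator {0..t} s * (V (t - s) * h s)) = (\<integral>\<^sup>+q. ennreal (indicator {0..t} s * indicator {0..t - s} q * v q * h s) \<partial>lborel)"
      proof (cases "s \<in> {0..t}")
        case True
        have "ennreal (V (t - s)) = (\<integral>\<^sup>+q. ennreal (indicator {0..t - s} q * v q) \<partial>lborel)"
          unfolding V_def by (rule lb_to_nn[OF vint]) (use True v_nonneg in auto)
        then have "ennreal (V (t - s)) * ennreal (h s) = (\<integral>\<^sup>+q. ennreal (indicator {0..t - s} q * v q) * ennreal (h s) \<partial>lborel)"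
          by (simp add: nn_integral_multc)
        also have "\<dots> = (\<integral>\<^sup>+q. ennreal (indicator {0..t} s * indicator {0..t - s} q * v q * h s) \<partial>lborel)"
          using True h0[of s] v_nonneg by (intro nn_integral_cong) (auto simp: indicator_def ennreal_mult'[symmetric])
        finally show ?thesis using True V_nonneg[of "t - s"] h0[of s] by (simp add: ennreal_mult'[symmetric])
      next
        case False then show ?thesis by simp
      qed
    qed
    also have "\<dots> = (\<integral>\<^sup>+q. \<integral>\<^sup>+s. ennreal (indicator {0..t} s * indicator {0..t - s} q * v q * h s) \<partial>lborel \<partial>lborel)"
      by (rule lborel_pair.Fubini'[symmetric], rule pair_meas) (unfold indicator_def atLeastAtMost_iff, measurable)
    also have "\<dots> = X" unfolding X_def
    proof (rule nn_integral_cong)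
      fix q :: real
      show "(\<integral>\<^sup>+s. ennreal (indicator {0..t} s * indicator {0..t - s} q * v q * h s) \<partial>lborel) = ennreal (indicator {0..t} q * v q * H (t - q))"
      proof (cases "q \<in> {0..t}")
        case True
        have "(\<integral>\<^sup>+s. ennreal (indicator {0..t} s * indicator {0..t - s} q * v q * h s) \<partial>lborel)
            = (\<integral>\<^sup>+s. ennreal (v q) * ennreal (indicator {0..t - q} s * h s) \<partial>lborel)"
          using True v_nonneg[of q] h0 by (intro nn_integral_cong) (auto simp: indicator_def ennreal_mult mult.commute)
        also have "\<dots> = ennreal (v q) * (\<integral>\<^sup>+s. ennreal (indicator {0..t - q} s * h s) \<partial>lborel)"
          by (rule nn_integral_cmult) measurable
        also have "\<dots> = ennreal (v q) * ennreal (H (t - q))" using Hnn[of "t - q"] True by simp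
        finally show ?thesis using True v_nonneg[of q] H_nonneg
          by (simp add: ennreal_mult'[symmetric])
      next
        case False
        then have "\<And>s. indicator {0..t} s * indicator {0..t - s} q * v q * h s = 0"
          by (auto simp: indicator_def)
        then show ?thesis using False by (simp only:) simp
      qed
    qed
    finally show ?thesis .
  qed
  have "(LBINT u:{0..t}. conv u) = (LBINT s:{0..t}. V (t - s) * h s)"
  proof -
    have a: "0 \<le> (LBINT u:{0..t}. conv u)" by (rule lb_nonneg) (use conv_nn in auto)
    have b: "0 \<le> (LBINT s:{0..t}. V (t - s) * h s)" by (rule lb_nonneg) (use V_nonneg h0 in auto)
    from L R have "ennreal (LBINT u:{0..t}. conv u) = ennreal (LBINT s:{0..t}. V (t - s) * h s)" by simp
    then show ?thesis using a b by (simp add: ennreal_inj)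
  qed
  then show ?thesis using V1 by simp
qed

end

context renew begin

lemma lin_int: "set_integrable lborel {0..T} (\<lambda>x. A + B * x)" if "0 \<le> T" for A B T :: real
proof (rule set_integrable_bdd_on[where B="\<bar>A\<bar> + \<bar>B\<bar> * T"])
  fix x assume x: "x \<in> {0..T}"
  have "\<bar>A + B * x\<bar> \<le> \<bar>A\<bar> + \<bar>B\<bar> * \<bar>x\<bar>" by (metis abs_mult abs_triangle_ineq)
  also have "\<bar>B\<bar> * \<bar>x\<bar> \<le> \<bar>B\<bar> * T" using x by (intro mult_left_mono) auto
  finally show "\<bar>A + B * x\<bar> \<le> \<bar>A\<bar> + \<bar>B\<bar> * T" by simp
qed (use that in auto)

lemma forcing_lin:
  assumes t: "0 \<le> t"
  shows "H t + (LBINT s:{0..t}. (1 + 4 * c * (t - s)) * h s) - (1 + 4 * c * t) \<le> 0"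
proof -
  define a where "a = 1 / (2 * c)"
  have a0: "0 < a" and ca: "c * a = 1/2" using c by (auto simp: a_def)
  have wI: "set_integrable lborel {0..t} (\<lambda>s. (1 + 4 * c * (t - s)) * h s)"
    using conv_int[OF lin_int[OF t, of 1 "4*c"]] by simp
  show ?thesis
  proof (cases "t \<le> a")
    case True
    have "(LBINT s:{0..t}. (1 + 4 * c * (t - s)) * h s) \<le> (LBINT s:{0..t}. (1 + 4 * c * t) * c)"
    proof (rule set_integral_mono[OF wI])
      show "set_integrable lborel {0..t} (\<lambda>s. (1 + 4 * c * t) * c)"
        by (rule set_integrable_bdd[where B="\<bar>(1 + 4 * c * t) * c\<bar>"]) (use t in auto)
      fix s assume s: "s \<in> {0..t}"
      have "(1 + 4 * c * (t - s)) * h s \<le> (1 + 4 * c * t) * h s"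
        using s c h0[of s] by (intro mult_right_mono) auto
      also have "\<dots> \<le> (1 + 4 * c * t) * c" using hc[of s] c t by (intro mult_left_mono) auto
      finally show "(1 + 4 * c * (t - s)) * h s \<le> (1 + 4 * c * t) * c" .
    qed
    also have "\<dots> = t * ((1 + 4 * c * t) * c)" using t by (simp add: lb_const)
    also have "\<dots> \<le> (1 + 4 * c * t) / 2"
    proof -
      have "c * t \<le> 1/2" using True ca c by (metis mult_left_mono less_imp_le)
      then have "(c * t) * (1 + 4 * c * t) \<le> (1/2) * (1 + 4 * c * t)"
        using c t by (intro mult_right_mono) auto
      then show ?thesis by (simp add: algebra_simps)
    qed
    finally have I: "(LBINT s:{0..t}. (1 + 4 * c * (t - s)) * h s) \<le> (1 + 4 * c * t) / 2" .
    have "H t \<le> 1/2"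
    proof -
      have "c * t \<le> 1/2" using True ca c by (metis mult_left_mono less_imp_le)
      then show ?thesis using H_le_c[OF t] by simp
    qed
    then have "H t + (LBINT s:{0..t}. (1 + 4 * c * (t - s)) * h s) \<le> 1/2 + (1 + 4 * c * t) / 2"
      using I by (rule add_mono)
    moreover have "1/2 + (1 + 4 * c * t) / 2 \<le> 1 + 4 * c * t" using c t by (simp add: field_simps)
    ultimately have "H t + (LBINT s:{0..t}. (1 + 4 * c * (t - s)) * h s) \<le> 1 + 4 * c * t" by (rule order_trans)
    then show ?thesis by (simp only: diff_le_0_iff_le)
  next
    case False
    then have ta: "a \<le> t" by simp
    define g where "g s = (1 + 4 * c * (t - a)) * h s + (if s < a then 4 * c * c * a else 0)" for s
    have gm: "g \<in> borel_measurable borel" unfolding g_def by measurable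
    have iteI: "set_integrable lborel {0..t} (\<lambda>s. if s < a then 4 * c * c * a else 0)"
      by (rule set_integrable_bdd[where B="4 * c * c * a"]) (use t c a0 in auto)
    have gI: "set_integrable lborel {0..t} g"
      unfolding g_def
      by (rule set_integral_add(1)[OF set_integrable_mult_right[OF hint] iteI]) (use t in auto)
    have "(LBINT s:{0..t}. (1 + 4 * c * (t - s)) * h s) \<le> (LBINT s:{0..t}. g s)"
    proof (rule set_integral_mono[OF wI gI])
      fix s assume s: "s \<in> {0..t}"
      show "(1 + 4 * c * (t - s)) * h s \<le> g s"
      proof (cases "s < a")
        case True
        have "(1 + 4 * c * (t - s)) * h s = (1 + 4 * c * (t - a)) * h s + 4 * c * (a - s) * h s"
          by (simp add: algebra_simps)
        also have "4 * c * (a - s) * h s \<le> 4 * c * (a - s) * c"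
          using True c hc[of s] by (intro mult_left_mono) auto
        also have "4 * c * (a - s) * c \<le> 4 * c * c * a" using s c by (simp add: algebra_simps)
        finally show ?thesis using True by (simp add: g_def)
      next
        case False
        have "(1 + 4 * c * (t - s)) * h s \<le> (1 + 4 * c * (t - a)) * h s"
          using False c h0[of s] by (intro mult_right_mono) auto
        then show ?thesis using False by (simp add: g_def)
      qed
    qed
    also have "(LBINT s:{0..t}. g s) = (1 + 4 * c * (t - a)) * H t + (LBINT s:{0..t}. (if s < a then 4 * c * c * a else 0))"
      unfolding g_def H_def
      by (subst set_integral_add(2)[OF set_integrable_mult_right[OF hint] iteI]) (use t in \<open>auto simp: set_integral_mult_right\<close>)
    also have "(LBINT s:{0..t}. (if s < a then 4 * c * c * a else 0)) \<le> 4 * c * c * (a * a)"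
    proof -
      have "(LBINT s:{0..t}. (if s < a then 4 * c * c * a else 0)) =
          (LBINT s:{0..a}. (if s < a then 4 * c * c * a else 0)) + (LBINT s:{a..t}. (if s < a then 4 * c * c * a else 0))"
        by (rule lb_split[OF _ ta iteI]) (use a0 in auto)
      also have "(LBINT s:{a..t}. (if s < a then 4 * c * c * a else 0)) = (LBINT s:{a..t}. (0::real))"
        by (rule set_lebesgue_integral_cong) auto
      also have "(LBINT s:{0..a}. (if s < a then 4 * c * c * a else 0)) \<le> (LBINT s:{0..a}. 4 * c * c * a)"
      proof (rule set_integral_mono)
        show "set_integrable lborel {0..a} (\<lambda>s. if s < a then 4 * c * c * a else 0)"
          by (rule set_integrable_subset[OF iteI]) (use ta in auto)
        show "set_integrable lborel {0..a} (\<lambda>s. 4 * c * c * a)"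
          by (rule set_integrable_bdd[where B="4 * c * c * a"]) (use c a0 in auto)
      qed (use c a0 in auto)
      finally show ?thesis using a0 by (simp add: lb_const mult_ac)
    qed
    finally have I: "(LBINT s:{0..t}. (1 + 4 * c * (t - s)) * h s) \<le> (1 + 4 * c * (t - a)) * H t + 4 * c * c * (a * a)"
      by simp
    define P where "P = 1 + 4 * c * (t - a)"
    have P0: "0 \<le> P" using ta c by (simp add: P_def)
    have PH: "P * H t \<le> P" using H_le1[OF t] P0 by (simp add: mult_left_le)
    have e1: "4 * c * c * (a * a) = 1"
    proof -
      have "4 * c * c * (a * a) = 4 * ((c * a) * (c * a))" by (simp only: mult_ac)
      then show ?thesis using ca by simp
    qed
    have e2: "P = 4 * c * t - 1"
    proof -
      have "4 * c * a = 2" using ca by (simp add: mult.commute)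
      then show ?thesis unfolding P_def by (simp add: right_diff_distrib)
    qed
    have "(LBINT s:{0..t}. (1 + 4 * c * (t - s)) * h s) \<le> P * H t + 1" using I e1 by (simp add: P_def)
    then show ?thesis using PH e2 H_le1[OF t] by linarith
  qed
qed

lemma V_lin:
  assumes x: "0 \<le> x"
  shows "V x \<le> 1 + 4 * c * x"
proof -
  define d where "d y = V y - (1 + 4 * c * y)" for y
  have "d x \<le> 0"
  proof (rule compare[OF c hm h0 hc, of d])
    show "d \<in> borel_measurable borel" unfolding d_def by measurable
    show "set_integrable lborel {0..T} d" if "0 \<le> T" for T
      unfolding d_def by (rule set_integral_diff(1)[OF V_int[OF that] lin_int[OF that]])
    fix t :: real assume t: "0 \<le> t"
    have i1: "set_integrable lborel {0..t} (\<lambda>s. V (t - s) * h s)" by (rule conv_int[OF V_int[OF t]])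
    have i2: "set_integrable lborel {0..t} (\<lambda>s. (1 + 4 * c * (t - s)) * h s)"
      using conv_int[OF lin_int[OF t, of 1 "4*c"]] by simp
    have "(LBINT s:{0..t}. d (t - s) * h s) = (LBINT s:{0..t}. V (t - s) * h s - (1 + 4 * c * (t - s)) * h s)"
      by (rule set_lebesgue_integral_cong) (auto simp: d_def algebra_simps)
    also have "\<dots> = (LBINT s:{0..t}. V (t - s) * h s) - (LBINT s:{0..t}. (1 + 4 * c * (t - s)) * h s)"
      by (rule set_integral_diff(2)[OF i1 i2])
    finally have e: "(LBINT s:{0..t}. d (t - s) * h s) = (LBINT s:{0..t}. V (t - s) * h s) - (LBINT s:{0..t}. (1 + 4 * c * (t - s)) * h s)" .
    show "d t \<le> (LBINT s:{0..t}. d (t - s) * h s)"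
      using V_eq[OF t] forcing_lin[OF t] e by (simp add: d_def)
  qed (use x in auto)
  then show ?thesis by (simp add: d_def)
qed

end

context renew begin

lemma V_subadd:
  assumes x: "0 \<le> x" and s0: "0 \<le> s0"
  shows "V (s0 + x) - V s0 \<le> 1 + V x"
proof -
  define K where "K = 1 + V x"
  define D where "D s = V (s + x) - V s - K" for s
  have "D s0 \<le> 0"
  proof (rule compare[OF c hm h0 hc, of D])
    show "D \<in> borel_measurable borel" unfolding D_def by measurable
    show "set_integrable lborel {0..T} D" if T: "0 \<le> T" for T
    proof (rule set_integrable_bdd_on[where B="V (T + x) + V T + \<bar>K\<bar>"])
      show "D \<in> borel_measurable borel" unfolding D_def by measurable
      fix y assume y: "y \<in> {0..T}"
      have "\<bar>D y\<bar> \<le> \<bar>V (y + x)\<bar> + \<bar>V y\<bar> + \<bar>K\<bar>" unfolding D_def by linarith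
      also have "\<dots> \<le> V (T + x) + V T + \<bar>K\<bar>"
        using y V_nonneg[of "y + x"] V_nonneg[of y] V_mono[of "y + x" "T + x"] V_mono[of y T] by simp
      finally show "\<bar>D y\<bar> \<le> V (T + x) + V T + \<bar>K\<bar>" .
    qed (use T in auto)
    fix s :: real assume s: "0 \<le> s"
    have sx: "0 \<le> s + x" using s x by simp
    have i1: "set_integrable lborel {0..s + x} (\<lambda>q. V (s + x - q) * h q)" by (rule conv_int[OF V_int[OF sx]])
    have i1a: "set_integrable lborel {0..s} (\<lambda>q. V (s + x - q) * h q)"
      by (rule set_integrable_subset[OF i1]) (use x in auto)
    have i2: "set_integrable lborel {0..s} (\<lambda>q. V (s - q) * h q)" by (rule conv_int[OF V_int[OF s]])
    have i3: "set_integrable lborel {0..s} (\<lambda>q. K * h q)" by (rule set_integrable_mult_right[OF hint]) (use s in auto)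
    define A1a where "A1a = (LBINT q:{0..s}. V (s + x - q) * h q)"
    define A1b where "A1b = (LBINT q:{s..s + x}. V (s + x - q) * h q)"
    define A2 where "A2 = (LBINT q:{0..s}. V (s - q) * h q)"
    have VA: "V (s + x) = H (s + x) + A1a + A1b"
      using V_eq[OF sx] lb_split[OF s _ i1] x by (simp add: A1a_def A1b_def)
    have VB: "V s = H s + A2" using V_eq[OF s] by (simp add: A2_def)
    have "(LBINT q:{0..s}. D (s - q) * h q) = (LBINT q:{0..s}. V (s + x - q) * h q - V (s - q) * h q - K * h q)"
      by (rule set_lebesgue_integral_cong) (auto simp: D_def algebra_simps)
    also have "\<dots> = A1a - A2 - K * H s"
      using set_integral_diff(2)[OF set_integral_diff(1)[OF i1a i2] i3] set_integral_diff(2)[OF i1a i2]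
      by (simp add: A1a_def A2_def H_def set_integral_mult_right)
    finally have DI: "(LBINT q:{0..s}. D (s - q) * h q) = A1a - A2 - K * H s" .
    have Hs: "H (s + x) = H s + (LBINT q:{s..s + x}. h q)"
      unfolding H_def by (rule lb_split[OF _ _ hint]) (use s x in auto)
    have "A1b \<le> (LBINT q:{s..s + x}. V x * h q)"
      unfolding A1b_def
    proof (rule set_integral_mono)
      show "set_integrable lborel {s..s + x} (\<lambda>q. V (s + x - q) * h q)"
        by (rule set_integrable_subset[OF i1]) (use s in auto)
      show "set_integrable lborel {s..s + x} (\<lambda>q. V x * h q)"
        by (rule set_integrable_mult_right[OF hint]) (use x in auto)
      fix q assume q: "q \<in> {s..s + x}"
      show "V (s + x - q) * h q \<le> V x * h q"
        using q h0[of q] V_mono[of "s + x - q" x] s by (intro mult_right_mono) auto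
    qed
    also have "\<dots> = V x * (H (s + x) - H s)" using Hs by (simp add: set_integral_mult_right)
    finally have A1b_le: "A1b \<le> V x * (H (s + x) - H s)" .
    have "D s - (LBINT q:{0..s}. D (s - q) * h q) = H (s + x) - H s + A1b - K + K * H s"
      using VA VB DI by (simp add: D_def algebra_simps)
    also have "\<dots> \<le> K * (H (s + x) - 1)"
      using A1b_le by (simp add: K_def algebra_simps)
    also have "\<dots> \<le> 0"
      using H_le1[OF sx] V_nonneg[of x] by (simp add: K_def mult_nonneg_nonpos)
    finally show "D s \<le> (LBINT q:{0..s}. D (s - q) * h q)" by simp
  qed (use s0 in auto)
  then show ?thesis by (simp add: D_def K_def)
qed

end

context renew begin

lemma window:
  assumes t: "0 \<le> t"
  shows "(LBINT s:{0..t}. indicator {real j..<real j + 1} s * v (t - s)) \<le> 2 + 4 * c"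
proof -
  define p where "p = max (t - real j - 1) 0"
  have p0: "0 \<le> p" by (simp add: p_def)
  have "(LBINT s:{0..t}. indicator {real j..<real j + 1} s * v (t - s))
      = (LBINT r:{0..t}. indicator {real j..<real j + 1} (t - r) * v r)"
    using lb_reflect[of t "\<lambda>r. indicator {real j..<real j + 1} (t - r) * v r"] by simp
  also have "\<dots> \<le> (LBINT r:{p..p + 1}. v r)"
  proof -
    have m1: "(\<lambda>r. indicator {real j..<real j + 1} (t - r) * v r) \<in> borel_measurable borel"
      unfolding indicator_def by measurable
    have i1: "integrable lborel (\<lambda>r. indicator {0..t} r * (indicator {real j..<real j + 1} (t - r) * v r))"
    proof -
      have "set_integrable lborel {0..t} (\<lambda>r. v r * indicator {real j..<real j + 1} (t - r))"
        by (rule set_integrable_bdd_mult[OF vint[OF t], where B=1]) (auto simp: indicator_def)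
      then show ?thesis by (simp add: set_integrable_def mult.commute)
    qed
    have i2: "integrable lborel (\<lambda>r. indicator {p..p + 1} r * v r)"
      using set_integrable_subset[OF vint[of "p + 1"]] p0 by (simp add: set_integrable_def)
    have "(LBINT r. indicator {0..t} r * (indicator {real j..<real j + 1} (t - r) * v r)) \<le> (LBINT r. indicator {p..p + 1} r * v r)"
    proof (rule integral_mono[OF i1 i2])
      fix r
      show "indicator {0..t} r * (indicator {real j..<real j + 1} (t - r) * v r) \<le> indicator {p..p + 1} r * v r"
      proof (cases "r \<in> {0..t} \<and> t - r \<in> {real j..<real j + 1}")
        case True
        then have "r \<in> {p..p+1}" by (auto simp: p_def)
        then show ?thesis using True by (simp add: indicator_def)
      next
        case False
        then have "indicator {0..t} r * (indicator {real j..<real j + 1} (t - r) * v r) = 0"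
          by (auto simp: indicator_def)
        moreover have "0 \<le> indicator {p..p + 1} r * v r"
          using v_nonneg[of r] p0 by (auto simp: indicator_def)
        ultimately show ?thesis by linarith
      qed
    qed
    then show ?thesis by (simp add: set_lebesgue_integral_def)
  qed
  also have "\<dots> = V (p + 1) - V p" using V_split[OF p0, of "p + 1"] by simp
  also have "\<dots> \<le> 1 + V 1" using V_subadd[of 1 p] p0 by simp
  also have "\<dots> \<le> 2 + 4 * c" using V_lin[of 1] by simp
  finally show ?thesis .
qed

lemma hsum: "(\<Sum>j<M. h (real j + 1)) \<le> H (real M)"
proof (induction M)
  case 0 then show ?case using H_nonneg by simp
next
  case (Suc M)
  have "H (real M + 1) = H (real M) + (LBINT s:{real M..real M + 1}. h s)"
    unfolding H_def by (rule lb_split[OF _ _ hint]) auto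
  then have "H (real (Suc M)) = H (real M) + (LBINT s:{real M..real M + 1}. h s)" by (simp add: add.commute)
  moreover have "h (real M + 1) \<le> (LBINT s:{real M..real M + 1}. h s)"
  proof -
    have "(LBINT s:{real M..real M + 1}. h (real M + 1)) \<le> (LBINT s:{real M..real M + 1}. h s)"
      by (rule set_integral_mono[OF set_integrable_bdd[where B="\<bar>h (real M + 1)\<bar>"] hint])
         (auto intro!: hmono)
    then show ?thesis by (simp add: lb_const)
  qed
  ultimately show ?case using Suc.IH by simp
qed

lemma v_bound:
  assumes t: "0 \<le> t"
  shows "v t \<le> c + (c + 1) * (2 + 4 * c)"
proof -
  define N where "N = Suc (nat \<lceil>t\<rceil>)"
  define f where "f j s = h (real j) * (indicator {real j..<real j + 1} s * v (t - s))" for j s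
  have fI: "set_integrable lborel {0..t} (f j)" for j
  proof -
    have "set_integrable lborel {0..t} (\<lambda>s. v (t - s) * (h (real j) * indicator {real j..<real j + 1} s))"
      by (rule set_integrable_bdd_mult[where B="c"])
         (auto simp: lb_reflect_integrable vint[OF t] indicator_def abs_mult intro: order_trans[OF _ hc] h0 simp: abs_of_nonneg h0 hc)
    moreover have "f j = (\<lambda>s. v (t - s) * (h (real j) * indicator {real j..<real j + 1} s))"
      by (auto simp: f_def fun_eq_iff mult_ac)
    ultimately show ?thesis by simp
  qed
  have cI: "set_integrable lborel {0..t} (\<lambda>s. v (t - s) * h s)" by (rule conv_int) (simp add: vint[OF t])
  have sI: "set_integrable lborel {0..t} (\<lambda>s. \<Sum>j<N. f j s)"
  proof -
    have "integrable lborel (\<lambda>x. \<Sum>j<N. indicator {0..t} x * f j x)"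
      by (rule Bochner_Integration.integrable_sum) (use fI in \<open>simp add: set_integrable_def\<close>)
    then show ?thesis unfolding set_integrable_def by (simp only: sum_distrib_left real_scaleR_def)
  qed
  have "(LBINT s:{0..t}. v (t - s) * h s) \<le> (LBINT s:{0..t}. \<Sum>j<N. f j s)"
  proof (rule set_integral_mono[OF cI sI])
    fix s assume s: "s \<in> {0..t}"
    define j0 where "j0 = nat \<lfloor>s\<rfloor>"
    have j0s: "real j0 \<le> s" "s < real j0 + 1" using s by (auto simp: j0_def)
    have j0N: "j0 \<in> {..<N}" using s unfolding j0_def N_def by (auto simp: nat_le_iff intro!: floor_le_ceiling le_imp_less_Suc dest: floor_mono) linarith
    have fn: "0 \<le> f j s" for j using h0 v_nonneg[of "t - s"] s by (auto simp: f_def indicator_def)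
    have "v (t - s) * h s \<le> v (t - s) * h (real j0)"
      using hmono[of "real j0" s] j0s v_nonneg[of "t - s"] s by (intro mult_left_mono) auto
    also have "\<dots> = f j0 s" using j0s by (simp add: f_def indicator_def)
    also have "\<dots> \<le> (\<Sum>j<N. f j s)" by (rule member_le_sum[OF j0N]) (use fn in auto)
    finally show "v (t - s) * h s \<le> (\<Sum>j<N. f j s)" .
  qed
  also have "(LBINT s:{0..t}. \<Sum>j<N. f j s) = (\<Sum>j<N. (LBINT s:{0..t}. f j s))"
    unfolding set_lebesgue_integral_def real_scaleR_def sum_distrib_left
    by (rule Bochner_Integration.integral_sum) (use fI in \<open>simp add: set_integrable_def\<close>)
  also have "\<dots> \<le> (\<Sum>j<N. h (real j) * (2 + 4 * c))"
  proof (rule sum_mono)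
    fix j
    have "(LBINT s:{0..t}. f j s) = h (real j) * (LBINT s:{0..t}. indicator {real j..<real j + 1} s * v (t - s))"
      by (simp add: f_def set_integral_mult_right)
    also have "\<dots> \<le> h (real j) * (2 + 4 * c)" using window[OF t, of j] h0 by (intro mult_left_mono) auto
    finally show "(LBINT s:{0..t}. f j s) \<le> h (real j) * (2 + 4 * c)" .
  qed
  also have "\<dots> = (\<Sum>j<N. h (real j)) * (2 + 4 * c)" by (simp add: sum_distrib_right)
  also have "\<dots> \<le> (c + 1) * (2 + 4 * c)"
  proof -
    have "(\<Sum>j<N. h (real j)) = h 0 + (\<Sum>j<nat \<lceil>t\<rceil>. h (real j + 1))"
      unfolding N_def by (subst sum.lessThan_Suc_shift) (simp add: add.commute)
    also have "\<dots> \<le> c + 1" using hc[of 0] hsum[of "nat \<lceil>t\<rceil>"] H_le1[of "real (nat \<lceil>t\<rceil>)"] by simp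
    finally show ?thesis using c by (intro mult_right_mono) auto
  qed
  finally have "(LBINT s:{0..t}. v (t - s) * h s) \<le> (c + 1) * (2 + 4 * c)" .
  then show ?thesis using veq[OF t] hc[of t] by simp
qed

end

lemma layer:
  fixes M :: "real measure" and f :: "real \<Rightarrow> real"
  assumes P: "prob_space M" and sM: "sets M = sets borel"
    and fm[measurable]: "f \<in> borel_measurable borel" and f0: "\<And>s. 0 \<le> f s"
  shows "(\<integral>\<^sup>+s. ennreal (indicator {0..} s * f s * tail M s) \<partial>lborel)
       = (\<integral>\<^sup>+y. (\<integral>\<^sup>+s. ennreal (indicator {0..<y} s * f s) \<partial>lborel) \<partial>M)"
proof -
  interpret prob_space M by (rule P)
  interpret PS: pair_sigma_finite lborel M
    by (metis pair_sigma_finite.intro prob_space_imp_sigma_finite sigma_finite_lborel P)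
  have mM[measurable]: "measurable M = measurable borel" by (intro ext measurable_cong_sets) (auto simp: sM)
  have "(\<integral>\<^sup>+s. ennreal (indicator {0..} s * f s * tail M s) \<partial>lborel)
      = (\<integral>\<^sup>+s. (\<integral>\<^sup>+y. ennreal (indicator {0..} s * f s * indicator {s<..} y) \<partial>M) \<partial>lborel)"
  proof (rule nn_integral_cong)
    fix s :: real
    have "(\<integral>\<^sup>+y. ennreal (indicator {0..} s * f s * indicator {s<..} y) \<partial>M)
        = (\<integral>\<^sup>+y. ennreal (indicator {0..} s * f s) * indicator {s<..} y \<partial>M)"
      by (intro nn_integral_cong) (auto simp: indicator_def)
    also have "\<dots> = ennreal (indicator {0..} s * f s) * emeasure M {s<..}"
      by (rule nn_integral_cmult_indicator) (simp add: sM)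
    also have "\<dots> = ennreal (indicator {0..} s * f s * tail M s)"
      using f0[of s] by (simp add: tail_def emeasure_eq_measure ennreal_mult)
    finally show "ennreal (indicator {0..} s * f s * tail M s) = (\<integral>\<^sup>+y. ennreal (indicator {0..} s * f s * indicator {s<..} y) \<partial>M)" ..
  qed
  also have "\<dots> = (\<integral>\<^sup>+y. (\<integral>\<^sup>+s. ennreal (indicator {0..} s * f s * indicator {s<..} y) \<partial>lborel) \<partial>M)"
  proof (rule PS.Fubini'[symmetric])
    have "sets (lborel \<Otimes>\<^sub>M M) = sets (borel \<Otimes>\<^sub>M (borel::real measure))"
      by (intro sets_pair_measure_cong) (simp_all add: sM)
    moreover have "(\<lambda>(s, y). ennreal (indicator {0..} s * f s * indicator {s<..} y)) \<in> borel_measurable (borel \<Otimes>\<^sub>M (borel::real measure))"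
      unfolding indicator_def greaterThan_iff atLeast_iff by measurable
    ultimately show "(\<lambda>(s, y). ennreal (indicator {0..} s * f s * indicator {s<..} y)) \<in> borel_measurable (lborel \<Otimes>\<^sub>M M)"
      using measurable_cong_sets[of "lborel \<Otimes>\<^sub>M M" "borel \<Otimes>\<^sub>M borel" borel borel] by blast
  qed
  also have "\<dots> = (\<integral>\<^sup>+y. (\<integral>\<^sup>+s. ennreal (indicator {0..<y} s * f s) \<partial>lborel) \<partial>M)"
    by (intro nn_integral_cong) (auto simp: indicator_def)
  finally show ?thesis .
qed

lemma nn_to_lb:
  fixes g :: "real \<Rightarrow> real"
  assumes gm[measurable]: "g \<in> borel_measurable borel" and A[measurable]: "A \<in> sets borel"
    and g0: "\<And>s. s \<in> A \<Longrightarrow> 0 \<le> g s"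
    and nn: "(\<integral>\<^sup>+s. ennreal (indicator A s * g s) \<partial>lborel) = ennreal r" and r: "0 \<le> r"
  shows "set_integrable lborel A g" "(LBINT s:A. g s) = r"
proof -
  have i: "integrable lborel (\<lambda>s. indicator A s * g s)"
    by (rule integrableI_nn_integral_finite[OF _ _ nn]) (use g0 in \<open>auto simp: indicator_def\<close>)
  then show "set_integrable lborel A g" by (simp add: set_integrable_def)
  have "ennreal (LBINT s:A. g s) = ennreal r"
    using nn nn_integral_eq_integral[OF i] g0 by (auto simp: set_lebesgue_integral_def indicator_def)
  moreover have "0 \<le> (LBINT s:A. g s)" by (rule lb_nonneg) (use g0 in auto)
  ultimately show "(LBINT s:A. g s) = r" using r by simp
qed

lemma tail_props:
  assumes "prob_on_Rplus M"
  shows "0 \<le> tail M t" "tail M t \<le> 1" "s \<le> t \<Longrightarrow> tail M t \<le> tail M s"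
    "tail M \<in> borel_measurable borel"
proof -
  interpret prob_space M using assms by (simp add: prob_on_Rplus_def)
  have sM: "sets M = sets borel" using assms by (simp add: prob_on_Rplus_def)
  show "0 \<le> tail M t" by (simp add: tail_def)
  show "tail M t \<le> 1" by (simp add: tail_def)
  have mono: "tail M t \<le> tail M s" if "s \<le> t" for s t
    unfolding tail_def by (rule finite_measure_mono) (use that sM in auto)
  then show "s \<le> t \<Longrightarrow> tail M t \<le> tail M s" .
  have "(\<lambda>t. - tail M t) \<in> borel_measurable borel"
    by (rule borel_measurable_mono) (auto simp: mono_def intro: mono)
  then have "(\<lambda>t. - (- tail M t)) \<in> borel_measurable borel" by measurable
  then show "tail M \<in> borel_measurable borel" by simp
qed

lemma lb_x: "0 \<le> (y::real) \<Longrightarrow> (LBINT s:{0..y}. s) = y^2 / 2"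
proof -
  assume y: "0 \<le> y"
  have "(LBINT s=ereal 0..ereal y. s) = y^2/2 - 0^2/2"
    by (rule interval_integral_FTC_finite) (use y in \<open>auto intro!: continuous_intros derivative_eq_intros simp: has_real_derivative_iff_has_vector_derivative[symmetric]\<close>)
  then show ?thesis using y by (simp add: interval_integral_Icc)
qed

lemma moments:
  assumes M: "prob_on_Rplus M" and i1: "integrable M (\<lambda>y. y)" and i2: "integrable M (\<lambda>y. y ^ 2)"
  shows "set_integrable lborel {0..} (tail M)" "(LBINT s:{0..}. tail M s) = first_moment M"
    "set_integrable lborel {0..} (\<lambda>s. s * tail M s)" "(LBINT s:{0..}. s * tail M s) = half_second_moment M"
proof -
  interpret prob_space M using M by (simp add: prob_on_Rplus_def)
  have sM: "sets M = sets borel" using M by (simp add: prob_on_Rplus_def)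
  have AE0: "AE y in M. 0 \<le> y" using M by (simp add: prob_on_Rplus_def)
  have tm[measurable]: "tail M \<in> borel_measurable borel" by (rule tail_props(4)[OF M])
  have mM: "measurable M = measurable borel" by (intro ext measurable_cong_sets) (auto simp: sM)
  have "(\<integral>\<^sup>+s. ennreal (indicator {0..} s * 1 * tail M s) \<partial>lborel)
       = (\<integral>\<^sup>+y. (\<integral>\<^sup>+s. ennreal (indicator {0..<y} s * 1) \<partial>lborel) \<partial>M)"
    by (rule layer) (use M in \<open>auto simp: prob_on_Rplus_def\<close>)
  also have "\<dots> = (\<integral>\<^sup>+y. ennreal y \<partial>M)"
  proof (rule nn_integral_cong_AE)
    show "AE y in M. (\<integral>\<^sup>+s. ennreal (indicator {0..<y} s * 1) \<partial>lborel) = ennreal y"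
      using AE0 by eventually_elim (simp add: ennreal_indicator)
  qed
  also have "\<dots> = ennreal (first_moment M)"
    unfolding first_moment_def by (rule nn_integral_eq_integral[OF i1 AE0])
  finally have nn1: "(\<integral>\<^sup>+s. ennreal (indicator {0..} s * tail M s) \<partial>lborel) = ennreal (first_moment M)" by simp
  have fm0: "0 \<le> first_moment M" unfolding first_moment_def by (rule integral_nonneg_AE[OF AE0])
  show "set_integrable lborel {0..} (tail M)" "(LBINT s:{0..}. tail M s) = first_moment M"
    by (rule nn_to_lb[OF tm _ _ nn1 fm0], simp, rule tail_props(1)[OF M])+
  have "(\<integral>\<^sup>+s. ennreal (indicator {0..} s * s * tail M s) \<partial>lborel)
       = (\<integral>\<^sup>+y. (\<integral>\<^sup>+s. ennreal (indicator {0..<y} s * max s 0) \<partial>lborel) \<partial>M)"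
  proof -
    have L: "(\<integral>\<^sup>+s. ennreal (indicator {0..} s * max s 0 * tail M s) \<partial>lborel) = (\<integral>\<^sup>+y. (\<integral>\<^sup>+s. ennreal (indicator {0..<y} s * max s 0) \<partial>lborel) \<partial>M)"
      by (rule layer) (use M in \<open>auto simp: prob_on_Rplus_def\<close>)
    moreover have "(\<integral>\<^sup>+s. ennreal (indicator {0..} s * s * tail M s) \<partial>lborel) = (\<integral>\<^sup>+s. ennreal (indicator {0..} s * max s 0 * tail M s) \<partial>lborel)"
      by (intro nn_integral_cong) (auto simp: indicator_def)
    ultimately show ?thesis by simp
  qed
  also have "\<dots> = (\<integral>\<^sup>+y. ennreal (y^2/2) \<partial>M)"
  proof (rule nn_integral_cong_AE)
    show "AE y in M. (\<integral>\<^sup>+s. ennreal (indicator {0..<y} s * max s 0) \<partial>lborel) = ennreal (y^2/2)"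
      using AE0
    proof eventually_elim
      fix y :: real assume y: "0 \<le> y"
      have "(\<integral>\<^sup>+s. ennreal (indicator {0..<y} s * max s 0) \<partial>lborel) = (\<integral>\<^sup>+s. ennreal (indicator {0..y} s * s) \<partial>lborel)"
        by (rule nn_integral_cong_AE) (use AE_lborel_singleton[of y] in \<open>eventually_elim, auto simp: indicator_def\<close>)
      also have "\<dots> = ennreal (LBINT s:{0..y}. s)"
        by (rule lb_to_nn[symmetric], rule set_integrable_bdd_on[where B=y]) (use y in auto)
      also have "\<dots> = ennreal (y^2/2)" by (simp only: lb_x[OF y])
      finally show "(\<integral>\<^sup>+s. ennreal (indicator {0..<y} s * max s 0) \<partial>lborel) = ennreal (y^2/2)" .
    qed
  qed
  also have "\<dots> = ennreal (half_second_moment M)"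
  proof -
    have "integrable M (\<lambda>y. y^2/2)" using i2 by simp
    moreover have "AE y in M. 0 \<le> y^2/2" by simp
    ultimately show ?thesis unfolding half_second_moment_def
      by (subst nn_integral_eq_integral) auto
  qed
  finally have nn2: "(\<integral>\<^sup>+s. ennreal (indicator {0..} s * (s * tail M s)) \<partial>lborel) = ennreal (half_second_moment M)"
    by (simp add: mult.assoc)
  have sm0: "0 \<le> half_second_moment M" unfolding half_second_moment_def by simp
  show "set_integrable lborel {0..} (\<lambda>s. s * tail M s)" "(LBINT s:{0..}. s * tail M s) = half_second_moment M"
    by (rule nn_to_lb[OF _ _ _ nn2 sm0], measurable, simp, simp add: tail_props(1)[OF M])+
qed

lemma powr_aux:
  fixes y \<alpha> :: real
  assumes y: "0 \<le> y" and a: "1 < \<alpha>"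
  shows "y powr \<alpha> * y \<le> 1 + y powr (2 * \<alpha>)"
proof (cases "y = 0")
  case True then show ?thesis by simp
next
  case False
  then have yp: "0 < y" using y by simp
  have e: "y powr \<alpha> * y = y powr (\<alpha> + 1)" using yp by (simp add: powr_add)
  show ?thesis
  proof (cases "y \<le> 1")
    case True
    have "y powr (\<alpha> + 1) \<le> 1" using True yp a by (intro powr_le1) auto
    then show ?thesis using e by (smt (verit) powr_ge_zero)
  next
    case False
    have "y powr (\<alpha> + 1) \<le> y powr (2 * \<alpha>)" using False a by (intro powr_mono) auto
    then show ?thesis using e by simp
  qed
qed

lemma alpha_moment:
  assumes M: "prob_on_Rplus M" and a: "1 < \<alpha>" and i: "integrable M (\<lambda>t. t powr (2 * \<alpha>))"
  shows "set_integrable lborel {0..} (\<lambda>s. s powr \<alpha> * tail M s)"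
proof -
  interpret prob_space M using M by (simp add: prob_on_Rplus_def)
  have sM: "sets M = sets borel" using M by (simp add: prob_on_Rplus_def)
  have AE0: "AE y in M. 0 \<le> y" using M by (simp add: prob_on_Rplus_def)
  have tm[measurable]: "tail M \<in> borel_measurable borel" by (rule tail_props(4)[OF M])
  have "(\<integral>\<^sup>+s. ennreal (norm (indicator {0..} s * (s powr \<alpha> * tail M s))) \<partial>lborel)
      = (\<integral>\<^sup>+s. ennreal (indicator {0..} s * s powr \<alpha> * tail M s) \<partial>lborel)"
    by (intro nn_integral_cong) (auto simp: indicator_def tail_def)
  also have "\<dots> = (\<integral>\<^sup>+y. (\<integral>\<^sup>+s. ennreal (indicator {0..<y} s * s powr \<alpha>) \<partial>lborel) \<partial>M)"
    by (rule layer) (use M in \<open>auto simp: prob_on_Rplus_def\<close>)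
  also have "\<dots> \<le> (\<integral>\<^sup>+y. ennreal (1 + y powr (2 * \<alpha>)) \<partial>M)"
  proof (rule nn_integral_mono_AE)
    show "AE y in M. (\<integral>\<^sup>+s. ennreal (indicator {0..<y} s * s powr \<alpha>) \<partial>lborel) \<le> ennreal (1 + y powr (2 * \<alpha>))"
      using AE0
    proof eventually_elim
      fix y :: real assume y: "0 \<le> y"
      have "(\<integral>\<^sup>+s. ennreal (indicator {0..<y} s * s powr \<alpha>) \<partial>lborel) \<le> (\<integral>\<^sup>+s. ennreal (y powr \<alpha>) * indicator {0..<y} s \<partial>lborel)"
        using a by (intro nn_integral_mono) (auto simp: indicator_def intro!: ennreal_leI powr_mono2)
      also have "\<dots> = ennreal (y powr \<alpha>) * emeasure lborel {0..<y}"
        by (rule nn_integral_cmult_indicator) simp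
      also have "\<dots> = ennreal (y powr \<alpha> * y)" using y by (simp add: ennreal_mult)
      also have "\<dots> \<le> ennreal (1 + y powr (2 * \<alpha>))" by (intro ennreal_leI powr_aux y a)
      finally show "(\<integral>\<^sup>+s. ennreal (indicator {0..<y} s * s powr \<alpha>) \<partial>lborel) \<le> ennreal (1 + y powr (2 * \<alpha>))" .
    qed
  qed
  also have "\<dots> = ennreal (\<integral>y. 1 + y powr (2 * \<alpha>) \<partial>M)"
    by (rule nn_integral_eq_integral) (use i in auto)
  also have "\<dots> < \<infinity>" by simp
  finally have "(\<integral>\<^sup>+s. ennreal (norm (indicator {0..} s * (s powr \<alpha> * tail M s))) \<partial>lborel) < \<infinity>" .
  then have "integrable lborel (\<lambda>s. indicator {0..} s * (s powr \<alpha> * tail M s))"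
    by (intro integrableI_bounded) (unfold indicator_def, measurable)
  then show ?thesis by (simp add: set_integrable_def)
qed

lemma exp_quad: "0 \<le> (y::real) \<Longrightarrow> exp (- y) \<le> 1 - y + y^2 / 2"
proof -
  assume y: "0 \<le> y"
  define f where "f z = 1 - z + z^2/2 - exp (- z)" for z :: real
  have "f 0 \<le> f y"
  proof (rule DERIV_nonneg_imp_nondecreasing[OF y])
    fix z :: real assume z: "0 \<le> z" "z \<le> y"
    have "(f has_real_derivative (- 1 + z + exp (- z))) (at z)"
      unfolding f_def by (auto intro!: derivative_eq_intros)
    moreover have "0 \<le> - 1 + z + exp (- z)" using exp_ge_add_one_self[of "- z"] by simp
    ultimately show "\<exists>d. (f has_real_derivative d) (at z) \<and> 0 \<le> d" by blast
  qed
  then show ?thesis by (simp add: f_def)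
qed

lemma exp_alpha:
  fixes y \<alpha> :: real
  assumes y: "0 \<le> y" and a: "1 < \<alpha>" "\<alpha> < 2"
  shows "exp (- y) \<le> 1 - y + y powr \<alpha>"
proof (cases "y \<le> 1")
  case True
  show ?thesis
  proof (cases "y = 0")
    case True then show ?thesis by simp
  next
    case False
    then have yp: "0 < y" using y by simp
    have "y^2 = y powr 2" using yp by (simp add: powr_realpow)
    also have "\<dots> \<le> y powr \<alpha>" using True yp a by (intro powr_mono') auto
    finally have "y^2 \<le> y powr \<alpha>" .
    then have "y^2/2 \<le> y powr \<alpha>" using zero_le_power2[of y] by linarith
    then show ?thesis using exp_quad[OF y] by simp
  qed
next
  case False
  have "y = y powr 1" using False by simp
  also have "\<dots> \<le> y powr \<alpha>" using False a by (intro powr_mono) auto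
  finally have "y \<le> y powr \<alpha>" .
  moreover have "exp (- y) \<le> 1" using y by simp
  ultimately show ?thesis by linarith
qed

lemma lb_sub_set:
  fixes g :: "real \<Rightarrow> real"
  assumes "set_integrable lborel B g" "A \<subseteq> B" "A \<in> sets borel" "\<And>x. x \<in> B \<Longrightarrow> 0 \<le> g x"
  shows "(LBINT x:A. g x) \<le> (LBINT x:B. g x)"
proof -
  have iA: "set_integrable lborel A g" by (rule set_integrable_subset[OF assms(1)]) (use assms in auto)
  show ?thesis
    unfolding set_lebesgue_integral_def
    by (rule integral_mono[OF iA[unfolded set_integrable_def] assms(1)[unfolded set_integrable_def]])
       (use assms in \<open>auto simp: indicator_def\<close>)
qed

lemma mass_bound:
  fixes \<Lambda> :: "real measure" and \<theta> \<alpha> c x :: real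
  assumes M: "prob_on_Rplus \<Lambda>" and i1: "integrable \<Lambda> (\<lambda>y. y)" and i2: "integrable \<Lambda> (\<lambda>y. y ^ 2)"
    and a: "1 < \<alpha>" "\<alpha> < 2" and th: "0 \<le> \<theta>" and c: "0 \<le> c" and x: "0 \<le> x"
    and ia: "set_integrable lborel {0..} (\<lambda>s. s powr \<alpha> * tail \<Lambda> s)"
  shows "(LBINT s:{0..x}. c * exp (- \<theta> * s) * tail \<Lambda> s)
     \<le> c * (first_moment \<Lambda> - \<theta> * half_second_moment \<Lambda> + \<theta> powr \<alpha> * (LBINT s:{0..}. s powr \<alpha> * tail \<Lambda> s))"
proof -
  note mom = moments[OF M i1 i2]
  have tm[measurable]: "tail \<Lambda> \<in> borel_measurable borel" by (rule tail_props(4)[OF M])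
  define g where "g s = tail \<Lambda> s - \<theta> * (s * tail \<Lambda> s) + \<theta> powr \<alpha> * (s powr \<alpha> * tail \<Lambda> s)" for s
  have gI: "set_integrable lborel {0..} g"
    unfolding g_def
    by (intro set_integral_add(1) set_integral_diff(1) set_integrable_mult_right mom(1) mom(3) ia)
  have gint: "(LBINT s:{0..}. g s) = first_moment \<Lambda> - \<theta> * half_second_moment \<Lambda> + \<theta> powr \<alpha> * (LBINT s:{0..}. s powr \<alpha> * tail \<Lambda> s)"
    unfolding g_def
    by (simp add: set_integral_add(2) set_integral_diff(2) set_integrable_mult_right set_integral_diff(1)
        mom ia set_integral_mult_right)
  have bound: "exp (- \<theta> * s) * tail \<Lambda> s \<le> g s" and g0: "0 \<le> g s" if s: "0 \<le> s" for s
  proof -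
    have ts: "0 \<le> \<theta> * s" using th s by simp
    have "exp (- \<theta> * s) \<le> 1 - \<theta> * s + (\<theta> * s) powr \<alpha>" using exp_alpha[OF ts a] by simp
    also have "(\<theta> * s) powr \<alpha> = \<theta> powr \<alpha> * s powr \<alpha>" using th s by (simp add: powr_mult)
    finally have e: "exp (- \<theta> * s) \<le> 1 - \<theta> * s + \<theta> powr \<alpha> * s powr \<alpha>" .
    have "exp (- \<theta> * s) * tail \<Lambda> s \<le> (1 - \<theta> * s + \<theta> powr \<alpha> * s powr \<alpha>) * tail \<Lambda> s"
      by (rule mult_right_mono[OF e tail_props(1)[OF M]])
    also have "\<dots> = g s" by (simp add: g_def algebra_simps)
    finally show "exp (- \<theta> * s) * tail \<Lambda> s \<le> g s" .
    then show "0 \<le> g s" using tail_props(1)[OF M, of s] by (smt (verit) exp_gt_zero mult_nonneg_nonneg)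
  qed
  have eI: "set_integrable lborel {0..x} (\<lambda>s. exp (- \<theta> * s) * tail \<Lambda> s)"
  proof (rule set_integrable_bdd_on[where B=1])
    fix s assume s: "s \<in> {0..x}"
    have "exp (- \<theta> * s) \<le> 1" using s th by simp
    then show "\<bar>exp (- \<theta> * s) * tail \<Lambda> s\<bar> \<le> 1"
      using tail_props(1,2)[OF M, of s] by (simp add: abs_mult mult_le_one)
  qed (use x in auto)
  have "(LBINT s:{0..x}. exp (- \<theta> * s) * tail \<Lambda> s) \<le> (LBINT s:{0..x}. g s)"
  proof (rule set_integral_mono[OF eI set_integrable_subset[OF gI]])
    fix s assume "s \<in> {0..x}"
    then show "exp (- \<theta> * s) * tail \<Lambda> s \<le> g s" using bound[of s] by simp
  qed auto
  also have "\<dots> \<le> (LBINT s:{0..}. g s)" by (rule lb_sub_set[OF gI]) (auto intro: g0)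
  finally have "(LBINT s:{0..x}. exp (- \<theta> * s) * tail \<Lambda> s) \<le> (LBINT s:{0..}. g s)" .
  then have "c * (LBINT s:{0..x}. exp (- \<theta> * s) * tail \<Lambda> s) \<le> c * (LBINT s:{0..}. g s)"
    using c by (rule mult_left_mono)
  then show ?thesis using gint by (simp add: set_integral_mult_right mult.assoc)
qed

lemma renewal_bound:
  fixes \<Lambda> :: "real measure" and R :: "real \<Rightarrow> real" and c \<theta> \<alpha> :: real
  assumes M: "prob_on_Rplus \<Lambda>" and i1: "integrable \<Lambda> (\<lambda>y. y)" and i2: "integrable \<Lambda> (\<lambda>y. y ^ 2)"
    and a: "1 < \<alpha>" "\<alpha> < 2" and th: "0 \<le> \<theta>" and c: "0 < c"
    and ia: "set_integrable lborel {0..} (\<lambda>s. s powr \<alpha> * tail \<Lambda> s)"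
    and mass: "c * (first_moment \<Lambda> - \<theta> * half_second_moment \<Lambda> + \<theta> powr \<alpha> * (LBINT s:{0..}. s powr \<alpha> * tail \<Lambda> s)) \<le> 1"
    and Rint: "\<forall>T\<ge>0. set_integrable lborel {0..T} R"
    and Req: "\<forall>t\<ge>0. R t = c * tail \<Lambda> t + c * (LBINT s=0..t. R (t - s) * tail \<Lambda> s)"
    and t: "0 \<le> t"
  shows "exp (- \<theta> * t) * R t \<le> c + (c + 1) * (2 + 4 * c)"
proof -
  have tm[measurable]: "tail \<Lambda> \<in> borel_measurable borel" by (rule tail_props(4)[OF M])
  define h where "h t = (if t < 0 then 0 else c * exp (- \<theta> * t) * tail \<Lambda> t)" for t
  define v where "v t = (if t < 0 then 0 else exp (- \<theta> * t) * R t)" for t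
  have Rm: "(\<lambda>x. indicator {0..real k} x * R x) \<in> borel_measurable borel" for k :: nat
  proof -
    have "integrable lborel (\<lambda>x. indicator {0..real k} x * R x)"
      using Rint by (simp add: set_integrable_def)
    then show ?thesis using borel_measurable_integrable by fastforce
  qed
  have vm: "v \<in> borel_measurable borel"
  proof (rule borel_measurable_LIMSEQ_real)
    fix k :: nat
    show "(\<lambda>x. exp (- \<theta> * x) * (indicator {0..real k} x * R x)) \<in> borel_measurable borel"
      using Rm[of k] by measurable
  next
    fix x :: real
    show "(\<lambda>k. exp (- \<theta> * x) * (indicator {0..real k} x * R x)) \<longlonglongrightarrow> v x"
    proof (cases "x < 0")
      case True then show ?thesis by (simp add: v_def indicator_def)
    next
      case False
      have "\<forall>\<^sub>F k in sequentially. exp (- \<theta> * x) * (indicator {0..real k} x * R x) = v x"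
      proof (rule eventually_sequentiallyI[of "nat \<lceil>x\<rceil>"])
        fix k assume "nat \<lceil>x\<rceil> \<le> k"
        then have "x \<le> real k" by linarith
        then show "exp (- \<theta> * x) * (indicator {0..real k} x * R x) = v x"
          using False by (simp add: v_def indicator_def)
      qed
      then show ?thesis by (rule tendsto_eventually)
    qed
  qed
  interpret renew h v c
  proof
    show "0 < c" by (rule c)
    show "h \<in> borel_measurable borel" unfolding h_def by measurable
    show "0 \<le> h t" for t using c tail_props(1)[OF M] by (simp add: h_def)
    show "h t \<le> c" for t
    proof (cases "t < 0")
      case False
      have "exp (- \<theta> * t) * tail \<Lambda> t \<le> 1 * 1"
        using False th tail_props(1,2)[OF M, of t] by (intro mult_mono) auto
      then have "c * (exp (- \<theta> * t) * tail \<Lambda> t) \<le> c * 1" using c by (intro mult_left_mono) auto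
      then show ?thesis using False by (simp add: h_def mult.assoc)
    qed (use c in \<open>simp add: h_def\<close>)
    show "h t \<le> h s" if "0 \<le> s" "s \<le> t" for s t
    proof -
      have "exp (- \<theta> * t) * tail \<Lambda> t \<le> exp (- \<theta> * s) * tail \<Lambda> s"
        using that th tail_props(1,3)[OF M] by (intro mult_mono) (auto intro: mult_left_mono)
      then have "c * (exp (- \<theta> * t) * tail \<Lambda> t) \<le> c * (exp (- \<theta> * s) * tail \<Lambda> s)" using c by (intro mult_left_mono) auto
      then show ?thesis using that by (simp add: h_def mult.assoc)
    qed
    show "(LBINT s:{0..x}. h s) \<le> 1" if x: "0 \<le> x" for x
    proof -
      have "(LBINT s:{0..x}. h s) = (LBINT s:{0..x}. c * exp (- \<theta> * s) * tail \<Lambda> s)"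
        by (rule set_lebesgue_integral_cong) (auto simp: h_def)
      also have "\<dots> \<le> c * (first_moment \<Lambda> - \<theta> * half_second_moment \<Lambda> + \<theta> powr \<alpha> * (LBINT s:{0..}. s powr \<alpha> * tail \<Lambda> s))"
        by (rule mass_bound[OF M i1 i2 a th _ x ia]) (use c in simp)
      finally show ?thesis using mass by simp
    qed
    show "v \<in> borel_measurable borel" by (rule vm)
    show "set_integrable lborel {0..T} v" if T: "0 \<le> T" for T
    proof (rule set_integrable_bound[OF Rint[rule_format, OF T]])
      show "set_borel_measurable lborel {0..T} v" unfolding set_borel_measurable_def using vm by measurable
      show "AE x\<in>{0..T} in lborel. norm (v x) \<le> norm (R x)"
      proof (intro AE_I2 impI)
        fix x assume "x \<in> {0..T}"
        moreover have "exp (- \<theta> * x) \<le> 1" if "0 \<le> x" using that th by simp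
        ultimately show "norm (v x) \<le> norm (R x)"
          by (auto simp: v_def abs_mult intro!: mult_left_le_one_le)
      qed
    qed
    show "v t = h t + (LBINT s:{0..t}. v (t - s) * h s)" if t: "0 \<le> t" for t
    proof -
      have I: "(LBINT s=0..t. R (t - s) * tail \<Lambda> s) = (LBINT s:{0..t}. R (t - s) * tail \<Lambda> s)"
        using interval_integral_Icc[OF t, of "\<lambda>s. R (t - s) * tail \<Lambda> s"] by (simp add: zero_ereal_def)
      have "v t = exp (- \<theta> * t) * (c * tail \<Lambda> t + c * (LBINT s:{0..t}. R (t - s) * tail \<Lambda> s))"
        using Req t I by (simp add: v_def)
      also have "\<dots> = h t + exp (- \<theta> * t) * c * (LBINT s:{0..t}. R (t - s) * tail \<Lambda> s)"
        using t by (simp add: h_def algebra_simps)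
      also have "\<dots> = h t + (LBINT s:{0..t}. exp (- \<theta> * t) * c * (R (t - s) * tail \<Lambda> s))"
        by (simp only: set_integral_mult_right)
      also have "(LBINT s:{0..t}. exp (- \<theta> * t) * c * (R (t - s) * tail \<Lambda> s)) = (LBINT s:{0..t}. v (t - s) * h s)"
      proof (rule set_lebesgue_integral_cong, simp, intro allI impI)
        fix s assume s: "s \<in> {0..t}"
        have "exp (- \<theta> * t) = exp (- \<theta> * (t - s)) * exp (- \<theta> * s)"
          by (simp add: exp_add[symmetric] algebra_simps)
        then show "exp (- \<theta> * t) * c * (R (t - s) * tail \<Lambda> s) = v (t - s) * h s"
          using s by (simp add: v_def h_def)
      qed
      finally show ?thesis .
    qed
  qed
  have "v t \<le> c + (c + 1) * (2 + 4 * c)" by (rule v_bound[OF t])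
  then show ?thesis using t by (simp add: v_def)
qed

theorem lemma5p2:
  fixes lam :: "nat \<Rightarrow> real" and Lam :: "nat \<Rightarrow> real measure"
    and p q :: "nat \<Rightarrow> nat \<Rightarrow> real" and gam :: "nat \<Rightarrow> real"
    and gstar lam0 eta0 sig0 b mlim \<alpha> \<beta> :: real
    and psi phi :: "real \<Rightarrow> real"
    and R :: "nat \<Rightarrow> real \<Rightarrow> real"
  assumes
    \<comment> \<open>standing assumptions\<close>
    lam_pos: "\<forall>n\<ge>1. lam n > 0"
    and Lam_prob: "\<forall>n\<ge>1. prob_on_Rplus (Lam n)"
    and Lam_moments: "\<forall>n\<ge>1. integrable (Lam n) (\<lambda>y. y) \<and> integrable (Lam n) (\<lambda>y. y ^ 2)"
    and p_prob: "\<forall>n\<ge>1. prob_on_Zplus (p n)"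
    and q_prob: "\<forall>n\<ge>1. prob_on_Zplus (q n)"
    and m_fin: "\<forall>n\<ge>1. summable (\<lambda>k. real k * p n k)"
    and gam_pos: "\<forall>n\<ge>1. gam n > 0"
    and gam_inf: "filterlim gam at_top sequentially"
    and gam_ratio: "(\<lambda>n. gam n / real n) \<longlonglongrightarrow> gstar" and gstar_nn: "gstar \<ge> 0"
    \<comment> \<open>Condition 1 (i)\<close>
    and C1_lam: "lam \<longlonglongrightarrow> lam0" "lam0 > 0"
    and C1_eta: "(\<lambda>n. first_moment (Lam n)) \<longlonglongrightarrow> eta0" "eta0 > 0"
    and C1_sig: "(\<lambda>n. half_second_moment (Lam n)) \<longlonglongrightarrow> sig0" "sig0 > 0"
    and C1_b: "(\<lambda>n. gam n * (1 - lam n * first_moment (Lam n))) \<longlonglongrightarrow> b"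
    \<comment> \<open>Condition 1 (ii)\<close>
    and C1_psi: "\<forall>T\<ge>0. uniform_limit {0..T} (psi_n gam q) psi sequentially"
    \<comment> \<open>Condition 1 (iii)\<close>
    and C1_phi_lip: "\<forall>T\<ge>0. \<exists>L. \<forall>n\<ge>1. L-lipschitz_on ({0..T} \<inter> {0..real n}) (phi_n gam p n)"
    and C1_phi_lim: "\<forall>T\<ge>0. uniform_limit {0..T} (phi_n gam p) phi sequentially"
    and C1_phi_cont: "continuous_on {0..} phi"
    \<comment> \<open>the limit m (which exists under Condition 1)\<close>
    and m_lim: "(\<lambda>n. gam n * (1 - mean_nat (p n))) \<longlonglongrightarrow> mlim"
    \<comment> \<open>Condition 2\<close>
    and alpha: "1 < \<alpha>" "\<alpha> < 2"
    and C2_1a: "\<exists>C k0. C > 0 \<and> k0 > 0 \<and> (\<forall>n\<ge>1.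
        summable (\<lambda>k. (real k / real n) powr \<alpha> * p n k) \<and>
        summable (\<lambda>k. real k powr \<alpha> * q n k) \<and>
        real n * gam n * (\<Sum>k. if k0 \<le> real k then (real k / real n) powr \<alpha> * p n k else 0)
          + (\<Sum>k. real k powr \<alpha> * q n k) \<le> C)"
    and C2_1b: "(\<lambda>k1::nat. limsup (\<lambda>n. ereal (gam n *
        (\<Sum>k. if k1 \<le> k then real k * p n k else 0)))) \<longlonglongrightarrow> 0"
    and C2_2: "\<exists>C0 Lstar. C0 > 0 \<and> prob_on_Rplus Lstar \<and>
        integrable Lstar (\<lambda>t. t powr (2 * \<alpha>)) \<and>
        (\<forall>n\<ge>1. \<forall>t\<ge>0. tail (Lam n) t \<le> C0 * tail Lstar t)"
    \<comment> \<open>choice of beta\<close>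
    and beta: "\<beta> \<ge> 0" "\<beta> > - (b + mlim) / (sig0 * lam0)"
    \<comment> \<open>R^(n): the locally integrable solution of the renewal equation\<close>
    and R_sol: "\<forall>n\<ge>1. renewal_solution (lam n) (Lam n) (mean_nat (p n)) (R n)"
  shows "\<exists>n0::nat. n0 \<ge> 1 \<and> (\<exists>C>0. \<forall>n>n0. \<forall>t\<ge>0. exp (- \<beta> * t / gam n) * R n t \<le> C)"
proof -
  obtain C0 Lstar where C0: "C0 > 0" and Ls: "prob_on_Rplus Lstar"
    and Lsi: "integrable Lstar (\<lambda>t. t powr (2 * \<alpha>))"
    and dom: "\<forall>n\<ge>1. \<forall>t\<ge>0. tail (Lam n) t \<le> C0 * tail Lstar t"
    using C2_2 by blast
  have iaS: "set_integrable lborel {0..} (\<lambda>s. s powr \<alpha> * tail Lstar s)"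
    by (rule alpha_moment[OF Ls alpha(1) Lsi])
  define K2 where "K2 = (LBINT s:{0..}. s powr \<alpha> * tail Lstar s)"
  define K' where "K' = C0 * K2"
  have K20: "0 \<le> K2" unfolding K2_def by (rule lb_nonneg) (simp add: tail_props(1)[OF Ls])
  have K'0: "0 \<le> K'" using C0 K20 by (simp add: K'_def)
  have ian: "set_integrable lborel {0..} (\<lambda>s. s powr \<alpha> * tail (Lam n) s)
      \<and> (LBINT s:{0..}. s powr \<alpha> * tail (Lam n) s) \<le> K'" if n: "n \<ge> 1" for n
  proof -
    have Mn: "prob_on_Rplus (Lam n)" using Lam_prob n by simp
    have tmn[measurable]: "tail (Lam n) \<in> borel_measurable borel" by (rule tail_props(4)[OF Mn])
    have iC: "set_integrable lborel {0..} (\<lambda>s. C0 * (s powr \<alpha> * tail Lstar s))"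
      by (rule set_integrable_mult_right[OF iaS])
    have pw: "s powr \<alpha> * tail (Lam n) s \<le> C0 * (s powr \<alpha> * tail Lstar s)" if s: "s \<in> {0..}" for s
    proof -
      have "s powr \<alpha> * tail (Lam n) s \<le> s powr \<alpha> * (C0 * tail Lstar s)"
        using dom n s by (intro mult_left_mono) auto
      then show ?thesis by (simp add: mult_ac)
    qed
    have i: "set_integrable lborel {0..} (\<lambda>s. s powr \<alpha> * tail (Lam n) s)"
    proof (rule set_integrable_bound[OF iC])
      show "set_borel_measurable lborel {0..} (\<lambda>s. s powr \<alpha> * tail (Lam n) s)"
        unfolding set_borel_measurable_def by measurable
      show "AE x\<in>{0..} in lborel. norm (x powr \<alpha> * tail (Lam n) x) \<le> norm (C0 * (x powr \<alpha> * tail Lstar x))"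
      proof (intro AE_I2 impI)
        fix x :: real assume x: "x \<in> {0..}"
        have "norm (x powr \<alpha> * tail (Lam n) x) = x powr \<alpha> * tail (Lam n) x"
          using tail_props(1)[OF Mn, of x] by simp
        also have "\<dots> \<le> C0 * (x powr \<alpha> * tail Lstar x)" by (rule pw[OF x])
        also have "\<dots> \<le> norm (C0 * (x powr \<alpha> * tail Lstar x))" by simp
        finally show "norm (x powr \<alpha> * tail (Lam n) x) \<le> norm (C0 * (x powr \<alpha> * tail Lstar x))" .
      qed
    qed
    have "(LBINT s:{0..}. s powr \<alpha> * tail (Lam n) s) \<le> (LBINT s:{0..}. C0 * (s powr \<alpha> * tail Lstar s))"
      by (rule set_integral_mono[OF i iC pw])
    also have "\<dots> = K'" by (simp add: K'_def K2_def set_integral_mult_right)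
    finally show ?thesis using i by simp
  qed
  have mean1: "1 \<le> mean_nat (p n)" if n: "n \<ge> 1" for n
  proof -
    have pp: "p n 0 = 0" "\<And>k. 0 \<le> p n k" "p n sums 1" using p_prob n by (auto simp: prob_on_Zplus_def)
    have "1 = (\<Sum>k. p n k)" using pp(3) by (simp add: sums_iff)
    also have "\<dots> \<le> (\<Sum>k. real k * p n k)"
    proof (rule suminf_le)
      show "p n k \<le> real k * p n k" for k
        using pp(1) pp(2)[of k] by (cases k) (auto simp: algebra_simps)
      show "summable (p n)" using pp(3) by (simp add: sums_iff)
      show "summable (\<lambda>k. real k * p n k)" using m_fin n by simp
    qed
    finally show ?thesis by (simp add: mean_nat_def)
  qed
  have ev1: "\<forall>\<^sub>F n in sequentially. 1 \<le> n" by (rule eventually_ge_at_top)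
  have gi: "(\<lambda>n. inverse (gam n)) \<longlonglongrightarrow> 0" by (rule tendsto_inverse_0_at_top[OF gam_inf])
  have mt: "(\<lambda>n. mean_nat (p n)) \<longlonglongrightarrow> 1"
  proof -
    have "(\<lambda>n. 1 - gam n * (1 - mean_nat (p n)) * inverse (gam n)) \<longlonglongrightarrow> 1 - mlim * 0"
      by (intro tendsto_intros m_lim gi)
    moreover have "\<forall>\<^sub>F n in sequentially. 1 - gam n * (1 - mean_nat (p n)) * inverse (gam n) = mean_nat (p n)"
      using ev1 by eventually_elim (use gam_pos in \<open>auto simp: field_simps\<close>)
    ultimately show ?thesis by (simp add: tendsto_cong)
  qed
  have lt: "(\<lambda>n. lam n * first_moment (Lam n)) \<longlonglongrightarrow> 1"
  proof -
    have "(\<lambda>n. 1 - gam n * (1 - lam n * first_moment (Lam n)) * inverse (gam n)) \<longlonglongrightarrow> 1 - b * 0"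
      by (intro tendsto_intros C1_b gi)
    moreover have "\<forall>\<^sub>F n in sequentially. 1 - gam n * (1 - lam n * first_moment (Lam n)) * inverse (gam n) = lam n * first_moment (Lam n)"
      using ev1 by eventually_elim (use gam_pos in \<open>auto simp: field_simps\<close>)
    ultimately show ?thesis by (simp add: tendsto_cong)
  qed
  have ct: "(\<lambda>n. lam n * mean_nat (p n)) \<longlonglongrightarrow> lam0" using tendsto_mult[OF C1_lam(1) mt] by simp
  have gp: "(\<lambda>n. gam n powr (1 - \<alpha>)) \<longlonglongrightarrow> 0" by (rule tendsto_neg_powr[OF _ gam_inf]) (use alpha in simp)
  define E where "E n = gam n * (1 - lam n * first_moment (Lam n))
      + (lam n * first_moment (Lam n)) * (gam n * (1 - mean_nat (p n)))
      + (lam n * mean_nat (p n)) * \<beta> * half_second_moment (Lam n)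
      - (lam n * mean_nat (p n)) * (\<beta> powr \<alpha> * gam n powr (1 - \<alpha>)) * K'" for n
  have Et: "E \<longlonglongrightarrow> b + 1 * mlim + lam0 * \<beta> * sig0 - lam0 * (\<beta> powr \<alpha> * 0) * K'"
    unfolding E_def by (intro tendsto_intros C1_b lt m_lim ct C1_sig(1) gp)
  have Lpos: "0 < b + 1 * mlim + lam0 * \<beta> * sig0 - lam0 * (\<beta> powr \<alpha> * 0) * K'"
  proof -
    have sl: "0 < sig0 * lam0" using C1_sig(2) C1_lam(2) by simp
    have "- (b + mlim) < \<beta> * (sig0 * lam0)" using beta(2) sl by (simp add: divide_less_eq)
    then show ?thesis by (simp add: algebra_simps)
  qed
  have evE: "\<forall>\<^sub>F n in sequentially. 0 < E n" by (rule order_tendstoD(1)[OF Et Lpos])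
  have evc: "\<forall>\<^sub>F n in sequentially. lam n * mean_nat (p n) < lam0 + 1"
    by (rule order_tendstoD(2)[OF ct]) simp
  obtain N where N: "\<And>n. n \<ge> N \<Longrightarrow> 0 < E n \<and> lam n * mean_nat (p n) < lam0 + 1"
    using eventually_conj[OF evE evc] unfolding eventually_sequentially by blast
  define C where "C = (lam0 + 1) + (lam0 + 1 + 1) * (2 + 4 * (lam0 + 1))"
  show ?thesis
  proof (intro exI conjI allI impI)
    show "1 \<le> max N 1" by simp
    show "0 < C" using C1_lam(2) by (simp add: C_def add_pos_pos)
    fix n :: nat and t :: real
    assume n: "max N 1 < n" and t: "0 \<le> t"
    have n1: "1 \<le> n" and nN: "N \<le> n" using n by auto
    define cn where "cn = lam n * mean_nat (p n)"
    define \<theta> where "\<theta> = \<beta> / gam n"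
    have gn: "0 < gam n" using gam_pos n1 by simp
    have cn0: "0 < cn" unfolding cn_def using lam_pos n1 mean1[OF n1] by simp
    have cnl: "cn < lam0 + 1" using N[OF nN] by (simp add: cn_def)
    have th0: "0 \<le> \<theta>" using beta(1) gn by (simp add: \<theta>_def)
    have Mn: "prob_on_Rplus (Lam n)" using Lam_prob n1 by simp
    have mom: "integrable (Lam n) (\<lambda>y. y)" "integrable (Lam n) (\<lambda>y. y ^ 2)" using Lam_moments n1 by auto
    note ia = ian[OF n1]
    define I2 where "I2 = (LBINT s:{0..}. s powr \<alpha> * tail (Lam n) s)"
    have mass: "cn * (first_moment (Lam n) - \<theta> * half_second_moment (Lam n) + \<theta> powr \<alpha> * I2) \<le> 1"
    proof -
      have "\<theta> powr \<alpha> * I2 \<le> \<theta> powr \<alpha> * K'" using ia by (intro mult_left_mono) (auto simp: I2_def)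
      then have "cn * (first_moment (Lam n) - \<theta> * half_second_moment (Lam n) + \<theta> powr \<alpha> * I2)
          \<le> cn * (first_moment (Lam n) - \<theta> * half_second_moment (Lam n) + \<theta> powr \<alpha> * K')"
        using cn0 by (intro mult_left_mono) auto
      also have "\<dots> < 1"
      proof -
        have e1: "gam n * \<theta> = \<beta>" using gn by (simp add: \<theta>_def)
        have e2: "gam n * \<theta> powr \<alpha> = \<beta> powr \<alpha> * gam n powr (1 - \<alpha>)"
          using gn beta(1) by (simp add: \<theta>_def powr_divide powr_diff)
        have "gam n * (1 - cn * (first_moment (Lam n) - \<theta> * half_second_moment (Lam n) + \<theta> powr \<alpha> * K'))
            = gam n - gam n * cn * first_moment (Lam n) + cn * (gam n * \<theta>) * half_second_moment (Lam n)
              - cn * (gam n * \<theta> powr \<alpha>) * K'"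
          by (simp add: algebra_simps)
        also have "\<dots> = E n" unfolding e1 e2 E_def cn_def by (simp add: algebra_simps)
        finally have "0 < gam n * (1 - cn * (first_moment (Lam n) - \<theta> * half_second_moment (Lam n) + \<theta> powr \<alpha> * K'))"
          using N[OF nN] by simp
        then show ?thesis using gn by (simp add: zero_less_mult_iff)
      qed
      finally show ?thesis by simp
    qed
    have Rs: "renewal_solution (lam n) (Lam n) (mean_nat (p n)) (R n)" using R_sol n1 by simp
    have Rint: "\<forall>T\<ge>0. set_integrable lborel {0..T} (R n)" and
      Req: "\<forall>t\<ge>0. R n t = cn * tail (Lam n) t + cn * (LBINT s=0..t. R n (t - s) * tail (Lam n) s)"
      using Rs by (auto simp: renewal_solution_def cn_def)
    have "exp (- \<theta> * t) * R n t \<le> cn + (cn + 1) * (2 + 4 * cn)"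
      by (rule renewal_bound[OF Mn mom alpha th0 cn0 ia[THEN conjunct1] mass[unfolded I2_def] Rint Req t])
    also have "\<dots> \<le> C"
    proof -
      have "(cn + 1) * (2 + 4 * cn) \<le> (lam0 + 1 + 1) * (2 + 4 * (lam0 + 1))"
        using cn0 cnl by (intro mult_mono) auto
      then show ?thesis using cnl by (simp add: C_def)
    qed
    finally show "exp (- \<beta> * t / gam n) * R n t \<le> C" by (simp add: \<theta>_def)
  qed
qed


end
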